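(* For $i\in\{1,2\}$, let $L_i$ be a planar semimodular lattice with a fixed planar diagram and let $L_i'$ be the full slimming sublattice of $L_i$ obtained from that diagram. Then: (i) $L_1$ is glued sum indecomposable if and only if $L_1'$ is glued sum indecomposable. (ii) If $\varphi\colon L_1\to L_2$ is a lattice isomorphism, then there is an automorphism $\pi$ of $L_1$ such that $\pi(x)=x$ for every reducible element $x\in L_1$, and the restriction of $\varphi\circ\pi$ to $L_1'$ is a $\nu$-preserving isomorphism from $L_1'$ onto $L_2'$, i.e., $\nu_{L_1,L_1'}=\nu_{L_2,L_2'}\circ(\varphi\circ\pi)|_{L_1'}$. (iii) Any two full slimming sublattices of a planar semimodular lattice (obtained from possibly different planar diagrams) are isomorphic.
   Context: All lattices are finite. A lattice is glued sum indecomposable if it is not a chain and every $x\in L\setminus\{0,1\}$ is incomparable with some element. An element is reducible if it is join-reducible or meet-reducible, i.e., not doubly irreducible. Given a planar diagram of a planar semimodular lattice $L$, an eye is a doubly irreducible element lying in the interior of an interval of length $2$ (strictly inside the region bounded by the leftmost and rightmost maximal chains of that interval). A full slimming sublattice $L'$ of $L$ is obtained by omitting eyes (with their edges) one by one as long as possible; $L'$ is a slim semimodular sublattice containing all reducible elements of $L$, and in it every element has at most two covers, so each $4$-cell (covering square of the diagram) of $L'$ is determined by its bottom. The numerical companion map $\nu_{L,L'}\colon L'\to\{0,1,2,\dots\}$ sends $x$ to $n$ if $x$ is the bottom of a $4$-cell of $L'$ into whose interior $n$ eyes of $L$ were placed, and to $0$ otherwise. An isomorphism $\varphi\colon L_1'\to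 L_2'$ is $\nu$-preserving if $\nu_{L_1,L_1'}=\nu_{L_2,L_2'}\circ\varphi$. *)

theory Defs
  imports "HOL-Analysis.Analysis"
begin

text \<open>A finite lattice is modelled as a type of class finite and lattice;
  sublattices (e.g. the full slimming sublattice) are subsets with the induced order.\<close>

definition covers :: "'a::order \<Rightarrow> 'a \<Rightarrow> bool" where
  "covers x y \<longleftrightarrow> x < y \<and> \<not> (\<exists>z. x < z \<and> z < y)"

definition covers_in :: "'a::order set \<Rightarrow> 'a \<Rightarrow> 'a \<Rightarrow> bool" where
  "covers_in S x y \<longleftrightarrow> x \<in> S \<and> y \<in> S \<and> x < y \<and> \<not> (\<exists>z\<in>S. x < z \<and> z < y)"

definition semimodular :: "'a::lattice itself \<Rightarrow> bool" where
  "semimodular _ \<longleftrightarrow> (\<forall>a b c::'a. covers a b \<longrightarrow>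
      (sup a c = sup b c \<or> covers (sup a c) (sup b c)))"

definition planar_diagram :: "('a::order \<Rightarrow> real \<times> real) \<Rightarrow> bool" where
  "planar_diagram p \<longleftrightarrow> inj p \<and>
     (\<forall>a b. covers a b \<longrightarrow> snd (p a) < snd (p b)) \<and>
     (\<forall>a b v. covers a b \<and> v \<noteq> a \<and> v \<noteq> b \<longrightarrow> p v \<notin> closed_segment (p a) (p b)) \<and>
     (\<forall>a b c d. covers a b \<and> covers c d \<and> (a, b) \<noteq> (c, d) \<longrightarrow>
        closed_segment (p a) (p b) \<inter> closed_segment (p c) (p d) \<subseteq> {p a, p b} \<inter> {p c, p d})"

definition is_lub_in :: "'a::order set \<Rightarrow> 'a \<Rightarrow> 'a \<Rightarrow> 'a \<Rightarrow> bool" where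
  "is_lub_in S y z x \<longleftrightarrow> x \<in> S \<and> y \<le> x \<and> z \<le> x \<and> (\<forall>w\<in>S. y \<le> w \<and> z \<le> w \<longrightarrow> x \<le> w)"

definition is_glb_in :: "'a::order set \<Rightarrow> 'a \<Rightarrow> 'a \<Rightarrow> 'a \<Rightarrow> bool" where
  "is_glb_in S y z x \<longleftrightarrow> x \<in> S \<and> x \<le> y \<and> x \<le> z \<and> (\<forall>w\<in>S. w \<le> y \<and> w \<le> z \<longrightarrow> w \<le> x)"

definition join_reducible_in :: "'a::order set \<Rightarrow> 'a \<Rightarrow> bool" where
  "join_reducible_in S x \<longleftrightarrow> (\<exists>y\<in>S. \<exists>z\<in>S. y < x \<and> z < x \<and> is_lub_in S y z x)"

definition meet_reducible_in :: "'a::order set \<Rightarrow> 'a \<Rightarrow> bool" where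
  "meet_reducible_in S x \<longleftrightarrow> (\<exists>y\<in>S. \<exists>z\<in>S. x < y \<and> x < z \<and> is_glb_in S y z x)"

definition reducible_in :: "'a::order set \<Rightarrow> 'a \<Rightarrow> bool" where
  "reducible_in S x \<longleftrightarrow> join_reducible_in S x \<or> meet_reducible_in S x"

definition doubly_irreducible_in :: "'a::order set \<Rightarrow> 'a \<Rightarrow> bool" where
  "doubly_irreducible_in S x \<longleftrightarrow> \<not> reducible_in S x"

definition length2_in :: "'a::order set \<Rightarrow> 'a \<Rightarrow> 'a \<Rightarrow> bool" where
  "length2_in S a b \<longleftrightarrow> a \<in> S \<and> b \<in> S \<and> a < b \<and> (\<exists>c\<in>S. a < c \<and> c < b) \<and>
     \<not> (\<exists>c\<in>S. \<exists>d\<in>S. a < c \<and> c < d \<and> d < b)"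

text \<open>Left-right position of the edge from a to c (horizontal displacement per unit height);
  smaller means further left.\<close>
definition slope :: "('a \<Rightarrow> real \<times> real) \<Rightarrow> 'a \<Rightarrow> 'a \<Rightarrow> real" where
  "slope p a c = (fst (p c) - fst (p a)) / (snd (p c) - snd (p a))"

text \<open>An eye of the current sublattice S (with the diagram inherited from p): a doubly
  irreducible element of S that is an atom of an interval [a,b] of length 2 of S lying
  strictly between the leftmost and the rightmost maximal chains of [a,b].\<close>
definition eye :: "('a::order \<Rightarrow> real \<times> real) \<Rightarrow> 'a set \<Rightarrow> 'a \<Rightarrow> bool" where
  "eye p S e \<longleftrightarrow> e \<in> S \<and> doubly_irreducible_in S e \<and>
     (\<exists>a\<in>S. \<exists>b\<in>S. length2_in S a b \<and> a < e \<and> e < b \<and>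
        (\<exists>c1\<in>S. \<exists>c2\<in>S. a < c1 \<and> c1 < b \<and> a < c2 \<and> c2 < b \<and>
           slope p a c1 < slope p a e \<and> slope p a e < slope p a c2))"

definition slimming_step :: "('a::order \<Rightarrow> real \<times> real) \<Rightarrow> 'a set \<Rightarrow> 'a set \<Rightarrow> bool" where
  "slimming_step p S T \<longleftrightarrow> (\<exists>e. eye p S e \<and> T = S - {e})"

definition full_slimming :: "('a::order \<Rightarrow> real \<times> real) \<Rightarrow> 'a set \<Rightarrow> bool" where
  "full_slimming p S \<longleftrightarrow> (slimming_step p)\<^sup>*\<^sup>* UNIV S \<and> \<not> (\<exists>e. eye p S e)"

text \<open>Numerical companion map: number of omitted eyes placed into the interior of the
  4-cell of L' whose bottom is x (0 if x is not the bottom of a 4-cell).\<close>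
definition nu :: "'a::order set \<Rightarrow> 'a \<Rightarrow> nat" where
  "nu S x = card {e. e \<notin> S \<and> (\<exists>c1 c2 t. c1 \<noteq> c2 \<and> covers_in S x c1 \<and> covers_in S x c2 \<and>
       covers_in S c1 t \<and> covers_in S c2 t \<and> x < e \<and> e < t)}"

definition glued_sum_indecomposable_in :: "'a::order set \<Rightarrow> bool" where
  "glued_sum_indecomposable_in S \<longleftrightarrow>
     \<not> (\<forall>x\<in>S. \<forall>y\<in>S. x \<le> y \<or> y \<le> x) \<and>
     (\<forall>x\<in>S. (\<exists>y\<in>S. y < x) \<and> (\<exists>y\<in>S. x < y) \<longrightarrow> (\<exists>y\<in>S. \<not> x \<le> y \<and> \<not> y \<le> x))"

definition lattice_iso :: "('a::lattice \<Rightarrow> 'b::lattice) \<Rightarrow> bool" where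
  "lattice_iso f \<longleftrightarrow> bij f \<and> (\<forall>x y. f (sup x y) = sup (f x) (f y) \<and> f (inf x y) = inf (f x) (f y))"

definition lattice_iso_on :: "('a::lattice \<Rightarrow> 'b::lattice) \<Rightarrow> 'a set \<Rightarrow> 'b set \<Rightarrow> bool" where
  "lattice_iso_on f S T \<longleftrightarrow> bij_betw f S T \<and>
     (\<forall>x\<in>S. \<forall>y\<in>S. f (sup x y) = sup (f x) (f y) \<and> f (inf x y) = inf (f x) (f y))"

end

theory Submission
  imports Defs
begin

definition lin :: "real \<times> real \<Rightarrow> real \<times> real \<Rightarrow> real \<Rightarrow> real" where
  "lin P Q y = fst P + (y - snd P) * (fst Q - fst P) / (snd Q - snd P)"

lemma seg_lin:
  assumes "snd P < snd Q" "w \<in> closed_segment P Q"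
  shows "snd P \<le> snd w \<and> snd w \<le> snd Q \<and> fst w = lin P Q (snd w)"
proof -
  obtain u where u: "0 \<le> u" "u \<le> 1" "w = (1 - u) *\<^sub>R P + u *\<^sub>R Q"
    using assms(2) by (auto simp: in_segment)
  have s: "snd w = snd P + u * (snd Q - snd P)" "fst w = fst P + u * (fst Q - fst P)"
    unfolding u(3) by (simp_all add: algebra_simps)
  have "snd P \<le> snd w" using s u assms(1) by simp
  moreover have "snd w \<le> snd Q" using s u assms(1)
    by (smt (verit) mult_left_le_one_le)
  moreover have "fst w = lin P Q (snd w)"
    using assms(1) unfolding lin_def s by (simp add: field_simps)
  ultimately show ?thesis by blast
qed

lemma lin_seg:
  assumes "snd P < snd Q" "snd P \<le> y" "y \<le> snd Q"
  shows "(lin P Q y, y) \<in> closed_segment P Q"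
proof -
  define u where "u = (y - snd P) / (snd Q - snd P)"
  have u: "0 \<le> u" "u \<le> 1" using assms by (auto simp: u_def field_simps)
  have f1: "fst ((1 - u) *\<^sub>R P + u *\<^sub>R Q) = fst P + u * (fst Q - fst P)"
    by (simp add: algebra_simps)
  have f2: "lin P Q y = fst P + u * (fst Q - fst P)"
    by (simp add: lin_def u_def)
  have L1: "lin P Q y = fst ((1 - u) *\<^sub>R P + u *\<^sub>R Q)" using f1 f2 by simp
  have g1: "snd ((1 - u) *\<^sub>R P + u *\<^sub>R Q) = snd P + u * (snd Q - snd P)"
    by (simp add: algebra_simps)
  have g2: "u * (snd Q - snd P) = y - snd P" using assms(1) by (simp add: u_def)
  have L2: "y = snd ((1 - u) *\<^sub>R P + u *\<^sub>R Q)" using g1 g2 by simp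
  have "(lin P Q y, y) = (1 - u) *\<^sub>R P + u *\<^sub>R Q"
    by (rule prod_eqI) (use L1 L2 in simp_all)
  then show ?thesis using u by (auto simp: in_segment)
qed

lemma lin_end: "snd P \<noteq> snd Q \<Longrightarrow> lin P Q (snd P) = fst P" "snd P \<noteq> snd Q \<Longrightarrow> lin P Q (snd Q) = fst Q"
  by (auto simp: lin_def field_simps)

lemma lin_cont: "continuous_on UNIV (lin P Q)"
proof -
  have eq: "lin P Q = (\<lambda>y. fst P + (y - snd P) * ((fst Q - fst P) / (snd Q - snd P)))"
    by (rule ext) (simp add: lin_def)
  show ?thesis unfolding eq by (intro continuous_intros)
qed

definition Lf :: "real \<times> real \<Rightarrow> real \<times> real \<Rightarrow> real \<times> real \<Rightarrow> real \<Rightarrow> real" where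
  "Lf A C B y = (if y \<le> snd C then lin A C y else lin C B y)"

lemma Lf_cont:
  assumes "snd A < snd C" "snd C < snd B"
  shows "continuous_on UNIV (Lf A C B)"
proof -
  have "continuous_on ({..snd C} \<union> {snd C..}) (\<lambda>y. if y \<le> snd C then lin A C y else lin C B y)"
    apply (rule continuous_on_cases)
    using continuous_on_subset[OF lin_cont[of A C] subset_UNIV] continuous_on_subset[OF lin_cont[of C B] subset_UNIV] assms
    by (auto simp: lin_end)
  moreover have "{..snd C} \<union> {snd C..} = UNIV" by auto
  ultimately show ?thesis unfolding Lf_def[abs_def] by simp
qed

lemma Lf_bd1:
  assumes "snd A < snd C" "w \<in> closed_segment A C"
  shows "fst w = Lf A C B (snd w) \<and> snd A \<le> snd w \<and> snd w \<le> snd C"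
proof -
  have "snd A \<le> snd w \<and> snd w \<le> snd C \<and> fst w = lin A C (snd w)" by (rule seg_lin[OF assms])
  then show ?thesis unfolding Lf_def by simp
qed

lemma Lf_bd2:
  assumes "snd A < snd C" "snd C < snd B" "w \<in> closed_segment C B"
  shows "fst w = Lf A C B (snd w) \<and> snd C \<le> snd w \<and> snd w \<le> snd B"
proof -
  have h: "snd C \<le> snd w \<and> snd w \<le> snd B \<and> fst w = lin C B (snd w)" by (rule seg_lin[OF assms(2,3)])
  show ?thesis
  proof (cases "snd w \<le> snd C")
    case True
    then have "snd w = snd C" using h by simp
    then show ?thesis using h assms lin_end[of A C] lin_end[of C B] unfolding Lf_def by simp
  next
    case False
    then show ?thesis using h unfolding Lf_def by simp
  qed
qed

lemma Lf_bd:
  assumes "snd A < snd C" "snd C < snd B" "w \<in> closed_segment A C \<union> closed_segment C B"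
  shows "fst w = Lf A C B (snd w) \<and> snd A \<le> snd w \<and> snd w \<le> snd B"
  using assms Lf_bd1[OF assms(1), of w B] Lf_bd2[OF assms(1,2), of w] by fastforce

lemma Lf_pt:
  assumes "snd A < snd C" "snd C < snd B" "snd A \<le> y" "y \<le> snd B"
  shows "(Lf A C B y, y) \<in> closed_segment A C \<union> closed_segment C B"
  using assms lin_seg[of A C y] lin_seg[of C B y] unfolding Lf_def by (cases "y \<le> snd C") auto

lemma Lf_ends:
  assumes "snd A < snd C" "snd C < snd B"
  shows "Lf A C B (snd A) = fst A" "Lf A C B (snd B) = fst B"
  using assms lin_end[of A C] lin_end[of C B] unfolding Lf_def by auto

definition Rin where
  "Rin A C1 B C2 = {w. snd A < snd w \<and> snd w < snd B \<and> Lf A C1 B (snd w) < fst w \<and> fst w < Lf A C2 B (snd w)}"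

definition Bd :: "real \<times> real \<Rightarrow> real \<times> real \<Rightarrow> real \<times> real \<Rightarrow> real \<times> real \<Rightarrow> (real \<times> real) set" where
  "Bd A C1 B C2 = closed_segment A C1 \<union> closed_segment C1 B \<union> closed_segment A C2 \<union> closed_segment C2 B"

locale quad =
  fixes A C1 B C2 :: "real \<times> real"
  assumes h1: "snd A < snd C1" and h2: "snd C1 < snd B" and h3: "snd A < snd C2" and h4: "snd C2 < snd B"
begin

lemma Bd_Rin: assumes "w \<in> Bd A C1 B C2" shows "w \<notin> Rin A C1 B C2"
proof -
  have "fst w = Lf A C1 B (snd w) \<or> fst w = Lf A C2 B (snd w)"
    using assms Lf_bd[OF h1 h2, of w] Lf_bd[OF h3 h4, of w] unfolding Bd_def by blast
  then show ?thesis unfolding Rin_def by auto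
qed

lemma frame:
  assumes "snd A \<le> snd w" "snd w \<le> snd B" "Lf A C1 B (snd w) \<le> fst w" "fst w \<le> Lf A C2 B (snd w)"
    "w \<notin> Rin A C1 B C2"
  shows "w \<in> Bd A C1 B C2"
proof -
  have nr: "\<not> (snd A < snd w \<and> snd w < snd B \<and> Lf A C1 B (snd w) < fst w \<and> fst w < Lf A C2 B (snd w))"
    using assms(5) by (simp add: Rin_def)
  consider "snd w = snd A" | "snd w = snd B" | "fst w = Lf A C1 B (snd w)" | "fst w = Lf A C2 B (snd w)"
    using assms(1-4) nr by linarith
  then show ?thesis
  proof cases
    case 1
    then have "w = A" using assms(3,4) Lf_ends[OF h1 h2] Lf_ends[OF h3 h4] by (simp add: prod_eq_iff)
    then show ?thesis by (simp add: Bd_def)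
  next
    case 2
    then have "w = B" using assms(3,4) Lf_ends[OF h1 h2] Lf_ends[OF h3 h4] by (simp add: prod_eq_iff)
    then show ?thesis by (simp add: Bd_def)
  next
    case 3
    then have "w = (Lf A C1 B (snd w), snd w)" by (simp add: prod_eq_iff)
    then show ?thesis using Lf_pt[OF h1 h2 assms(1,2)] unfolding Bd_def by (metis UnE UnI1 UnI2)
  next
    case 4
    then have "w = (Lf A C2 B (snd w), snd w)" by (simp add: prod_eq_iff)
    then show ?thesis using Lf_pt[OF h3 h4 assms(1,2)] unfolding Bd_def by (metis UnE UnI1 UnI2)
  qed
qed

lemma exit:
  assumes "z \<in> Rin A C1 B C2" "Q \<notin> Rin A C1 B C2"
  shows "\<exists>w\<in>closed_segment z Q. w \<in> Bd A C1 B C2"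
proof (rule ccontr)
  assume nb: "\<not> ?thesis"
  define Cl where "Cl = {w. snd A \<le> snd w \<and> snd w \<le> snd B \<and> Lf A C1 B (snd w) \<le> fst w \<and> fst w \<le> Lf A C2 B (snd w)}"
  have cL: "continuous_on UNIV (\<lambda>w::real\<times>real. Lf A C1 B (snd w))"
    by (rule continuous_on_compose2[OF Lf_cont[OF h1 h2] continuous_on_snd[OF continuous_on_id]]) auto
  have cR: "continuous_on UNIV (\<lambda>w::real\<times>real. Lf A C2 B (snd w))"
    by (rule continuous_on_compose2[OF Lf_cont[OF h3 h4] continuous_on_snd[OF continuous_on_id]]) auto
  have cs: "continuous_on UNIV (\<lambda>w::real\<times>real. snd w)" "continuous_on UNIV (\<lambda>w::real\<times>real. fst w)"
    "continuous_on UNIV (\<lambda>w::real\<times>real. snd A)" "continuous_on UNIV (\<lambda>w::real\<times>real. snd B)"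
    by (intro continuous_intros)+
  have oR: "open (Rin A C1 B C2)"
  proof -
    have "Rin A C1 B C2 = {w. snd A < snd w} \<inter> {w. snd w < snd B} \<inter> {w. Lf A C1 B (snd w) < fst w} \<inter> {w. fst w < Lf A C2 B (snd w)}"
      unfolding Rin_def by auto
    then show ?thesis by (simp only:) (intro open_Int open_Collect_less cL cR cs)
  qed
  have cC: "closed Cl"
  proof -
    have "Cl = {w. snd A \<le> snd w} \<inter> {w. snd w \<le> snd B} \<inter> {w. Lf A C1 B (snd w) \<le> fst w} \<inter> {w. fst w \<le> Lf A C2 B (snd w)}"
      unfolding Cl_def by auto
    then show ?thesis by (simp only:) (intro closed_Int closed_Collect_le cL cR cs)
  qed
  have RC: "Rin A C1 B C2 \<subseteq> Cl" unfolding Rin_def Cl_def by auto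
  have sub: "closed_segment z Q \<subseteq> Rin A C1 B C2 \<union> (- Cl)"
  proof
    fix w assume "w \<in> closed_segment z Q"
    with nb have "w \<notin> Bd A C1 B C2" by blast
    then show "w \<in> Rin A C1 B C2 \<union> (- Cl)" using frame[of w] unfolding Cl_def by auto
  qed
  have oC: "open (- Cl)" using cC by (simp add: open_Compl)
  have dj: "Rin A C1 B C2 \<inter> (- Cl) \<inter> closed_segment z Q = {}" using RC by blast
  have "Rin A C1 B C2 \<inter> closed_segment z Q = {} \<or> (- Cl) \<inter> closed_segment z Q = {}"
    by (rule connectedD[OF connected_segment oR oC dj sub])
  moreover have "z \<in> Rin A C1 B C2 \<inter> closed_segment z Q" using assms by auto
  moreover have "Q \<in> (- Cl) \<inter> closed_segment z Q"
    using frame[of Q] nb assms(2) unfolding Cl_def by auto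
  ultimately show False by blast
qed

end

lemma cov_up:
  fixes x y :: "'a::{finite,order}"
  assumes "x < y" shows "\<exists>z. covers x z \<and> z \<le> y"
proof -
  have "finite {z. x < z \<and> z \<le> y}" "{z. x < z \<and> z \<le> y} \<noteq> {}" using assms by auto
  from finite_has_minimal[OF this] obtain m where m: "x < m" "m \<le> y"
    "\<forall>b\<in>{z. x < z \<and> z \<le> y}. b \<le> m \<longrightarrow> m = b" by blast
  have "covers x m" unfolding covers_def using m by (auto dest: less_imp_le)
  then show ?thesis using m by blast
qed

lemma cov_down:
  fixes x y :: "'a::{finite,order}"
  assumes "x < y" shows "\<exists>z. x \<le> z \<and> covers z y"
proof -
  have "finite {z. x \<le> z \<and> z < y}" "{z. x \<le> z \<and> z < y} \<noteq> {}" using assms by auto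
  from finite_has_maximal[OF this] obtain m where m: "x \<le> m" "m < y"
    "\<forall>b\<in>{z. x \<le> z \<and> z < y}. m \<le> b \<longrightarrow> m = b" by blast
  have "\<not> (\<exists>z. m < z \<and> z < y)"
  proof
    assume "\<exists>z. m < z \<and> z < y"
    then obtain z where z: "m < z" "z < y" by blast
    have "x \<le> z" using m(1) z(1) by (meson less_imp_le order.trans)
    then have "m = z" using m(3) z by (auto dest: less_imp_le)
    then show False using z by simp
  qed
  then have "covers m y" unfolding covers_def using m by blast
  then show ?thesis using m by blast
qed

lemma height:
  fixes p :: "'a::{finite,order} \<Rightarrow> real \<times> real"
  assumes pd: "planar_diagram p"
  shows "x < y \<Longrightarrow> snd (p x) < snd (p y)"
proof (induction "card {z. z < y}" arbitrary: y rule: less_induct)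
  case less
  obtain z where z: "x \<le> z" "covers z y" using cov_down[OF less.prems] by blast
  have cz: "snd (p z) < snd (p y)" using pd z(2) unfolding planar_diagram_def by blast
  show ?case
  proof (cases "x = z")
    case True then show ?thesis using cz by simp
  next
    case False
    then have xz: "x < z" using z by simp
    have zy: "z < y" using z(2) by (simp add: covers_def)
    have "{w. w < z} \<subset> {w. w < y}" using zy by auto
    then have "card {w. w < z} < card {w. w < y}" by (simp add: psubset_card_mono)
    then have "snd (p x) < snd (p z)" using less.hyps xz by blast
    then show ?thesis using cz by simp
  qed
qed

lemma planar_meet:
  fixes p :: "'a::order \<Rightarrow> real \<times> real"
  assumes pd: "planar_diagram p" and uv: "covers u v \<or> covers v u" and cd: "covers c d"
    and w1: "w \<in> closed_segment (p u) (p v)" and w2: "w \<in> closed_segment (p c) (p d)"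
    and u: "u \<noteq> c" "u \<noteq> d"
  shows "w \<in> {p u, p v} \<inter> {p c, p d}"
proof -
  have pl: "\<And>a b c d. covers a b \<Longrightarrow> covers c d \<Longrightarrow> (a, b) \<noteq> (c, d) \<Longrightarrow>
        closed_segment (p a) (p b) \<inter> closed_segment (p c) (p d) \<subseteq> {p a, p b} \<inter> {p c, p d}"
    using pd unfolding planar_diagram_def by blast
  from uv show ?thesis
  proof
    assume "covers u v"
    then show ?thesis using pl[of u v c d] cd w1 w2 u by blast
  next
    assume "covers v u"
    then show ?thesis using pl[of v u c d] cd w1 w2 u by (auto simp: closed_segment_commute)
  qed
qed

locale geo =
  fixes p :: "'a::{finite,lattice} \<Rightarrow> real \<times> real" and a c1 e c2 b :: 'a
  assumes pd: "planar_diagram p"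
    and ac1: "covers a c1" and c1b: "covers c1 b" and ac2: "covers a c2" and c2b: "covers c2 b"
    and ae: "covers a e" and eb: "covers e b" and ec1: "e \<noteq> c1" and ec2: "e \<noteq> c2"
    and sl1: "slope p a c1 < slope p a e" and sl2: "slope p a e < slope p a c2"
begin

lemma hts: "snd (p a) < snd (p c1)" "snd (p c1) < snd (p b)" "snd (p a) < snd (p c2)" "snd (p c2) < snd (p b)"
  "snd (p a) < snd (p e)" "snd (p e) < snd (p b)"
  using pd ac1 c1b ac2 c2b ae eb unfolding planar_diagram_def by blast+

interpretation quad "p a" "p c1" "p b" "p c2"
  using hts by unfold_locales auto

abbreviation "R \<equiv> Rin (p a) (p c1) (p b) (p c2)"

lemma inj_p: "inj p" using pd unfolding planar_diagram_def by blast

lemma bd_vertices: "p a \<in> Bd (p a) (p c1) (p b) (p c2)" "p b \<in> Bd (p a) (p c1) (p b) (p c2)"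
  "p c1 \<in> Bd (p a) (p c1) (p b) (p c2)" "p c2 \<in> Bd (p a) (p c1) (p b) (p c2)"
  unfolding Bd_def by auto

lemma edge_exit:
  assumes uv: "covers u v \<or> covers v u" and pu: "p u \<in> R" and pv: "p v \<notin> R"
  shows "v \<in> {a, c1, c2, b}"
proof -
  obtain w where w: "w \<in> closed_segment (p u) (p v)" "w \<in> Bd (p a) (p c1) (p b) (p c2)"
    using exit[OF pu pv] by blast
  have wu: "w \<noteq> p u" using Bd_Rin[OF w(2)] pu by auto
  have "p a \<notin> R" "p b \<notin> R" "p c1 \<notin> R" "p c2 \<notin> R" using bd_vertices Bd_Rin by blast+
  then have un: "u \<notin> {a, c1, c2, b}" using pu by auto
  obtain c d where cd: "covers c d" "c \<in> {a, c1, c2, b}" "d \<in> {a, c1, c2, b}" "w \<in> closed_segment (p c) (p d)"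
    using w(2) ac1 c1b ac2 c2b unfolding Bd_def by blast
  have "w \<in> {p u, p v} \<inter> {p c, p d}"
    using planar_meet[OF pd uv cd(1) w(1) cd(4)] un cd(2,3) by auto
  then have "p v \<in> {p c, p d}" using wu by auto
  then have "v \<in> {c, d}" using inj_p by (auto dest: injD)
  then show ?thesis using cd by auto
qed

lemma e_in: "p e \<in> R"
proof (rule ccontr)
  assume ne: "p e \<notin> R"
  define h where "h = min (snd (p c1)) (snd (p c2)) - snd (p a)"
  define D where "D = snd (p e) - snd (p a)"
  have hp: "h > 0" using hts by (simp add: h_def)
  have Dp: "D > 0" using hts by (simp add: D_def)
  define t where "t = h / (h + D)"
  have t0: "0 < t" "t \<le> 1" using hp Dp by (auto simp: t_def field_simps)
  have tD: "t * D < h" using hp Dp by (simp add: t_def field_simps)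
  define z where "z = (1 - t) *\<^sub>R p a + t *\<^sub>R p e"
  have zs: "snd z = snd (p a) + t * D" by (simp add: z_def D_def algebra_simps)
  have se: "D * slope p a e = fst (p e) - fst (p a)" using Dp by (simp add: slope_def D_def)
  have zf0: "fst z = fst (p a) + t * (fst (p e) - fst (p a))" by (simp add: z_def algebra_simps)
  have zf: "fst z = fst (p a) + t * D * slope p a e"
    using zf0 se by (simp add: mult.assoc)
  have sz1: "snd z \<le> snd (p c1)" "snd z \<le> snd (p c2)" using zs tD by (auto simp: h_def)
  have L1: "Lf (p a) (p c1) (p b) (snd z) = fst (p a) + t * D * slope p a c1"
    using sz1 zs by (simp add: Lf_def lin_def slope_def)
  have L2: "Lf (p a) (p c2) (p b) (snd z) = fst (p a) + t * D * slope p a c2"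
    using sz1 zs by (simp add: Lf_def lin_def slope_def)
  have tDp: "t * D > 0" using t0 Dp by simp
  have zR: "z \<in> R"
    unfolding Rin_def using zs zf L1 L2 tDp sz1 hts mult_strict_left_mono[OF sl1 tDp] mult_strict_left_mono[OF sl2 tDp] by auto
  obtain w where w: "w \<in> closed_segment z (p e)" "w \<in> Bd (p a) (p c1) (p b) (p c2)"
    using exit[OF zR ne] by blast
  have zseg: "z \<in> closed_segment (p a) (p e)" unfolding in_segment z_def using t0 by (intro exI[of _ t]) auto
  have "closed_segment z (p e) \<subseteq> closed_segment (p a) (p e)"
    by (rule closed_segment_subset[OF zseg]) auto
  then have w1: "w \<in> closed_segment (p e) (p a)" using w(1) by (auto simp: closed_segment_commute)
  have t1: "t < 1" using hp Dp by (simp add: t_def field_simps)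
  have "t * D < D" using t1 Dp by simp
  then have "snd z < snd (p e)" using zs by (simp add: D_def)
  then have "snd z \<le> snd w" using seg_lin[OF _ w(1)] by blast
  then have wa: "w \<noteq> p a" using zs tDp by auto
  have en: "e \<notin> {a, c1, c2, b}" using ec1 ec2 ae eb by (auto simp: covers_def)
  obtain c d where cd: "covers c d" "c \<in> {a, c1, c2, b}" "d \<in> {a, c1, c2, b}" "w \<in> closed_segment (p c) (p d)"
    using w(2) ac1 c1b ac2 c2b unfolding Bd_def by blast
  have "w \<in> {p e, p a} \<inter> {p c, p d}"
    using planar_meet[OF pd _ cd(1) w1 cd(4)] ae en cd(2,3) by auto
  then have "p e \<in> {p c, p d}" using wa by auto
  then have "e \<in> {c, d}" using inj_p by (auto dest: injD)
  then show False using cd en by auto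
qed

lemma up_in: "e \<le> x \<Longrightarrow> \<not> b \<le> x \<Longrightarrow> p x \<in> R"
proof (induction "card {z. z < x}" arbitrary: x rule: less_induct)
  case less
  show ?case
  proof (cases "x = e")
    case True then show ?thesis using e_in by simp
  next
    case False
    then have "e < x" using less.prems by simp
    then obtain z where z: "e \<le> z" "covers z x" using cov_down by blast
    have zx: "z < x" using z(2) by (simp add: covers_def)
    have nbz: "\<not> b \<le> z" using less.prems zx by (meson order.trans less_imp_le)
    have "{w. w < z} \<subset> {w. w < x}" using zx by auto
    then have "card {w. w < z} < card {w. w < x}" by (simp add: psubset_card_mono)
    then have pz: "p z \<in> R" using less.hyps z(1) nbz by blast
    show ?thesis
    proof (rule ccontr)
      assume "p x \<notin> R"
      then have "x \<in> {a, c1, c2, b}" using edge_exit[of z x] z(2) pz by blast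
      moreover have "x \<noteq> a" using \<open>e < x\<close> ae by (auto simp: covers_def)
      moreover have "x \<noteq> c1" using \<open>e < x\<close> ae ac1 by (auto simp: covers_def)
      moreover have "x \<noteq> c2" using \<open>e < x\<close> ae ac2 by (auto simp: covers_def)
      moreover have "x \<noteq> b" using less.prems by auto
      ultimately show False by auto
    qed
  qed
qed

lemma down_in: "x \<le> e \<Longrightarrow> \<not> x \<le> a \<Longrightarrow> p x \<in> R"
proof (induction "card {z. x < z}" arbitrary: x rule: less_induct)
  case less
  show ?case
  proof (cases "x = e")
    case True then show ?thesis using e_in by simp
  next
    case False
    then have "x < e" using less.prems by simp
    then obtain z where z: "covers x z" "z \<le> e" using cov_up by blast
    have zx: "x < z" using z(1) by (simp add: covers_def)
    have nbz: "\<not> z \<le> a" using less.prems zx by (meson order.trans less_imp_le)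
    have "{w. z < w} \<subset> {w. x < w}" using zx by auto
    then have "card {w. z < w} < card {w. x < w}" by (simp add: psubset_card_mono)
    then have pz: "p z \<in> R" using less.hyps z(2) nbz by blast
    show ?thesis
    proof (rule ccontr)
      assume "p x \<notin> R"
      then have "x \<in> {a, c1, c2, b}" using edge_exit[of z x] z(1) pz by blast
      moreover have "x \<noteq> a" using less.prems by auto
      moreover have "x \<noteq> c1" using \<open>x < e\<close> ae ac1 by (auto simp: covers_def)
      moreover have "x \<noteq> c2" using \<open>x < e\<close> ae ac2 by (auto simp: covers_def)
      moreover have "x \<noteq> b" using \<open>x < e\<close> eb by (auto simp: covers_def)
      ultimately show False by auto
    qed
  qed
qed

lemma up_unique: assumes ed: "covers e d" shows "d = b"
proof (rule ccontr)
  assume db: "d \<noteq> b"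
  have ndb: "\<not> b \<le> d" using ed eb db by (auto simp: covers_def)
  have edl: "e \<le> d" using ed by (simp add: covers_def less_imp_le)
  have "finite {x. d \<le> x \<and> \<not> b \<le> x}" "d \<in> {x. d \<le> x \<and> \<not> b \<le> x}" using ndb by auto
  from finite_has_maximal2[OF this] obtain m where m: "d \<le> m" "\<not> b \<le> m"
    "\<forall>y\<in>{x. d \<le> x \<and> \<not> b \<le> x}. m \<le> y \<longrightarrow> m = y" by blast
  have "m \<le> sup b m" by simp
  moreover have "sup b m \<noteq> m" using m(2) by (metis sup_ge1)
  ultimately have "m < sup b m" by (simp add: order.strict_iff_order)
  then obtain w where w: "covers m w" "w \<le> sup b m" using cov_up by blast
  have mw: "m < w" using w(1) by (simp add: covers_def)
  have bw: "b \<le> w"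
  proof (rule ccontr)
    assume "\<not> b \<le> w"
    moreover have "d \<le> w" using m(1) mw by simp
    ultimately have "m = w" using m(3) mw by simp
    then show False using mw by simp
  qed
  have "e < m" using ed m(1) by (auto simp: covers_def intro: order.strict_trans2)
  then have "b \<noteq> w" using mw eb by (auto simp: covers_def)
  then have bw': "b < w" using bw by simp
  have pm: "p m \<in> R" using up_in[OF order.trans[OF edl m(1)] m(2)] .
  have "snd (p b) < snd (p w)" using height[OF pd bw'] .
  then have "p w \<notin> R" unfolding Rin_def by auto
  then have "w \<in> {a, c1, c2, b}" using edge_exit[of m w] w(1) pm by blast
  moreover have "a < w" "c1 < w" "c2 < w" using bw' ac1 c1b ac2 c2b
    by (auto simp: covers_def intro: order.strict_trans)
  ultimately show False using bw' by auto
qed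

lemma down_unique: assumes de: "covers d e" shows "d = a"
proof (rule ccontr)
  assume da: "d \<noteq> a"
  have nda: "\<not> d \<le> a" using de ae da by (auto simp: covers_def)
  have del: "d \<le> e" using de by (simp add: covers_def less_imp_le)
  have "finite {x. x \<le> d \<and> \<not> x \<le> a}" "d \<in> {x. x \<le> d \<and> \<not> x \<le> a}" using nda by auto
  from finite_has_minimal2[OF this] obtain m where m: "m \<le> d" "\<not> m \<le> a"
    "\<forall>y\<in>{x. x \<le> d \<and> \<not> x \<le> a}. y \<le> m \<longrightarrow> m = y" by blast
  have "inf a m \<le> m" by simp
  moreover have "inf a m \<noteq> m" using m(2) by (metis inf_le1)
  ultimately have "inf a m < m" by (simp add: order.strict_iff_order)
  then obtain w where w: "inf a m \<le> w" "covers w m" using cov_down by blast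
  have mw: "w < m" using w(2) by (simp add: covers_def)
  have wa: "w \<le> a"
  proof (rule ccontr)
    assume "\<not> w \<le> a"
    moreover have "w \<le> d" using m(1) mw by simp
    ultimately have "m = w" using m(3) mw by simp
    then show False using mw by simp
  qed
  have "m < e" using de m(1) by (auto simp: covers_def intro: order.strict_trans1)
  then have "w \<noteq> a" using mw ae by (auto simp: covers_def)
  then have wa': "w < a" using wa by simp
  have pm: "p m \<in> R" using down_in[OF order.trans[OF m(1) del] m(2)] .
  have "snd (p w) < snd (p a)" using height[OF pd wa'] .
  then have "p w \<notin> R" unfolding Rin_def by auto
  then have "w \<in> {a, c1, c2, b}" using edge_exit[of m w] w(2) pm by blast
  moreover have "w < c1" "w < c2" "w < b" using wa' ac1 c1b ac2 c2b
    by (auto simp: covers_def intro: order.strict_trans)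
  ultimately show False using wa' by auto
qed

end

definition ucov :: "'a::order \<Rightarrow> 'a \<Rightarrow> 'a \<Rightarrow> bool" where
  "ucov r a b \<longleftrightarrow> (\<forall>z. covers z r \<longleftrightarrow> z = a) \<and> (\<forall>z. covers r z \<longleftrightarrow> z = b)"

lemma ucov_covers: "ucov r a b \<Longrightarrow> covers a r \<and> covers r b"
  by (simp add: ucov_def)

lemma ucov_unique: assumes u1: "ucov r a b" and u2: "ucov r a' b'" shows "a = a' \<and> b = b'"
proof -
  have "covers a r" "covers r b" using u1 by (simp_all add: ucov_def)
  then show ?thesis using u2 by (simp add: ucov_def)
qed

lemma ucov_le:
  fixes r :: "'a::{finite,order}"
  assumes u: "ucov r a b" and zr: "z \<noteq> r"
  shows "(r \<le> z \<longleftrightarrow> b \<le> z) \<and> (z \<le> r \<longleftrightarrow> z \<le> a)"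
proof -
  have ar: "a < r" and rb: "r < b" using ucov_covers[OF u] by (auto simp: covers_def)
  have 1: "r \<le> z \<longleftrightarrow> b \<le> z"
  proof
    assume "r \<le> z"
    then have "r < z" using zr by simp
    then obtain m where "covers r m" "m \<le> z" using cov_up by blast
    then show "b \<le> z" using u by (simp add: ucov_def)
  next
    assume "b \<le> z" then show "r \<le> z" using rb by simp
  qed
  have 2: "z \<le> r \<longleftrightarrow> z \<le> a"
  proof
    assume "z \<le> r"
    then have "z < r" using zr by simp
    then obtain m where "z \<le> m" "covers m r" using cov_down by blast
    then show "z \<le> a" using u by (simp add: ucov_def)
  next
    assume "z \<le> a" then show "z \<le> r" using ar by simp
  qed
  show ?thesis using 1 2 by blast
qed

lemma ucov_not_red:
  fixes r :: "'a::{finite,lattice}"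
  assumes u: "ucov r a b"
  shows "\<not> reducible_in UNIV r"
proof -
  have ar: "a < r" and rb: "r < b" using ucov_covers[OF u] by (auto simp: covers_def)
  have "\<not> join_reducible_in UNIV r"
  proof
    assume "join_reducible_in UNIV r"
    then obtain y z where yz: "y < r" "z < r" "is_lub_in UNIV y z r" unfolding join_reducible_in_def by blast
    have "y \<le> a" using ucov_le[OF u, of y] yz(1) by (auto simp: less_imp_le)
    moreover have "z \<le> a" using ucov_le[OF u, of z] yz(2) by (auto simp: less_imp_le)
    ultimately have "r \<le> a" using yz(3) unfolding is_lub_in_def by blast
    then show False using ar by simp
  qed
  moreover have "\<not> meet_reducible_in UNIV r"
  proof
    assume "meet_reducible_in UNIV r"
    then obtain y z where yz: "r < y" "r < z" "is_glb_in UNIV y z r" unfolding meet_reducible_in_def by blast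
    have "b \<le> y" using ucov_le[OF u, of y] yz(1) by (auto simp: less_imp_le)
    moreover have "b \<le> z" using ucov_le[OF u, of z] yz(2) by (auto simp: less_imp_le)
    ultimately have "b \<le> r" using yz(3) unfolding is_glb_in_def by blast
    then show False using rb by simp
  qed
  ultimately show ?thesis unfolding reducible_in_def by blast
qed

lemma S_cov_down:
  fixes x y :: "'a::{finite,order}"
  assumes "x \<in> S" "y \<in> S" "x < y" shows "\<exists>m\<in>S. x \<le> m \<and> covers_in S m y"
proof -
  have "finite {z\<in>S. x \<le> z \<and> z < y}" "x \<in> {z\<in>S. x \<le> z \<and> z < y}" using assms by auto
  from finite_has_maximal2[OF this] obtain m where m: "m \<in> S" "x \<le> m" "m < y"
    "\<forall>b\<in>{z\<in>S. x \<le> z \<and> z < y}. m \<le> b \<longrightarrow> m = b" by blast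
  have "\<not> (\<exists>z\<in>S. m < z \<and> z < y)"
  proof
    assume "\<exists>z\<in>S. m < z \<and> z < y"
    then obtain z where z: "z \<in> S" "m < z" "z < y" by blast
    have "x \<le> z" using m(2) z(2) by (meson less_imp_le order.trans)
    then have "m = z" using m(4) z by (auto dest: less_imp_le)
    then show False using z by simp
  qed
  then show ?thesis using m assms unfolding covers_in_def by blast
qed

lemma S_cov_up:
  fixes x y :: "'a::{finite,order}"
  assumes "x \<in> S" "y \<in> S" "x < y" shows "\<exists>m\<in>S. covers_in S x m \<and> m \<le> y"
proof -
  have "finite {z\<in>S. x < z \<and> z \<le> y}" "y \<in> {z\<in>S. x < z \<and> z \<le> y}" using assms by auto
  from finite_has_minimal2[OF this] obtain m where m: "m \<in> S" "x < m" "m \<le> y"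
    "\<forall>b\<in>{z\<in>S. x < z \<and> z \<le> y}. b \<le> m \<longrightarrow> m = b" by blast
  have "\<not> (\<exists>z\<in>S. x < z \<and> z < m)"
  proof
    assume "\<exists>z\<in>S. x < z \<and> z < m"
    then obtain z where z: "z \<in> S" "x < z" "z < m" by blast
    have "z \<le> y" using m(3) z(3) by (meson less_imp_le order.trans)
    then have "m = z" using m(4) z by (auto dest: less_imp_le)
    then show False using z by simp
  qed
  then show ?thesis using m assms unfolding covers_in_def by blast
qed

lemma two_lower_jr:
  fixes x :: "'a::lattice"
  assumes cl: "sup y z \<in> S" and yz: "y \<noteq> z" and cy: "covers_in S y x" and cz: "covers_in S z x"
  shows "join_reducible_in S x"
proof -
  have yx: "y < x" "z < x" "x \<in> S" "y \<in> S" "z \<in> S" using cy cz by (auto simp: covers_in_def)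
  have le: "sup y z \<le> x" using yx by (simp add: less_imp_le)
  have "sup y z = x"
  proof (rule ccontr)
    assume "sup y z \<noteq> x"
    then have "sup y z < x" using le by (simp add: order.strict_iff_order)
    moreover have "y < sup y z"
    proof -
      have "y \<le> sup y z" by simp
      moreover have "y \<noteq> sup y z"
      proof
        assume "y = sup y z"
        then have "z \<le> y" by (metis sup_ge2)
        then have "z < y" using yz by simp
        then show False using cz yx unfolding covers_in_def by blast
      qed
      ultimately show ?thesis by (simp add: order.strict_iff_order)
    qed
    ultimately show False using cy cl unfolding covers_in_def by blast
  qed
  then have "is_lub_in S y z x" using yx unfolding is_lub_in_def by (auto simp: less_imp_le)
  then show ?thesis using yx unfolding join_reducible_in_def by blast
qed

lemma two_upper_mr:
  fixes x :: "'a::lattice"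
  assumes cl: "inf y z \<in> S" and yz: "y \<noteq> z" and cy: "covers_in S x y" and cz: "covers_in S x z"
  shows "meet_reducible_in S x"
proof -
  have yx: "x < y" "x < z" "x \<in> S" "y \<in> S" "z \<in> S" using cy cz by (auto simp: covers_in_def)
  have le: "x \<le> inf y z" using yx by (simp add: less_imp_le)
  have "inf y z = x"
  proof (rule ccontr)
    assume "inf y z \<noteq> x"
    then have "x < inf y z" using le by (simp add: order.strict_iff_order)
    moreover have "inf y z < y"
    proof -
      have "inf y z \<le> y" by simp
      moreover have "y \<noteq> inf y z"
      proof
        assume "y = inf y z"
        then have "y \<le> z" by (metis inf_le2)
        then have "y < z" using yz by simp
        then show False using cz yx unfolding covers_in_def by blast
      qed
      ultimately show ?thesis by (simp add: order.strict_iff_order)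
    qed
    ultimately show False using cy cl unfolding covers_in_def by blast
  qed
  then have "is_glb_in S y z x" using yx unfolding is_glb_in_def by (auto simp: less_imp_le)
  then show ?thesis using yx unfolding meet_reducible_in_def by blast
qed

definition Inv :: "'a::{finite,lattice} set \<Rightarrow> bool" where
  "Inv S \<longleftrightarrow> (\<forall>x\<in>S. \<forall>y\<in>S. covers_in S x y \<longleftrightarrow> covers x y) \<and>
     (\<forall>x\<in>S. \<forall>y\<in>S. sup x y \<in> S \<and> inf x y \<in> S) \<and>
     (\<forall>r. r \<notin> S \<longrightarrow> (\<exists>a b c1 c2. ucov r a b \<and> a \<in> S \<and> b \<in> S \<and> c1 \<in> S \<and> c2 \<in> S \<and> c1 \<noteq> c2 \<and>
        covers a c1 \<and> covers c1 b \<and> covers a c2 \<and> covers c2 b))"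

lemma Inv_UNIV: "Inv (UNIV :: 'a::{finite,lattice} set)"
  unfolding Inv_def covers_in_def covers_def by auto

lemma eye_info:
  fixes S :: "'a::{finite,lattice} set"
  assumes I: "Inv S" and ey: "eye p S e"
  shows "\<exists>a b c1 c2. a \<in> S \<and> b \<in> S \<and> c1 \<in> S \<and> c2 \<in> S \<and> e \<in> S \<and> covers a e \<and> covers e b \<and>
     covers a c1 \<and> covers c1 b \<and> covers a c2 \<and> covers c2 b \<and> c1 \<noteq> c2 \<and> c1 \<noteq> e \<and> c2 \<noteq> e \<and>
     (\<forall>z\<in>S. covers_in S z e \<longrightarrow> z = a) \<and> (\<forall>z\<in>S. covers_in S e z \<longrightarrow> z = b) \<and>
     \<not> join_reducible_in S e \<and> \<not> meet_reducible_in S e"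
proof -
  have I1: "\<And>x y. x \<in> S \<Longrightarrow> y \<in> S \<Longrightarrow> covers_in S x y \<longleftrightarrow> covers x y" using I unfolding Inv_def by blast
  have cl: "\<And>x y. x \<in> S \<Longrightarrow> y \<in> S \<Longrightarrow> sup x y \<in> S \<and> inf x y \<in> S" using I unfolding Inv_def by blast
  obtain a b c1 c2 where e: "e \<in> S" "doubly_irreducible_in S e" "a \<in> S" "b \<in> S" "length2_in S a b"
    "a < e" "e < b" "c1 \<in> S" "c2 \<in> S" "a < c1" "c1 < b" "a < c2" "c2 < b"
    "slope p a c1 < slope p a e" "slope p a e < slope p a c2"
    using ey unfolding eye_def by blast
  have nochain: "\<not> (\<exists>c\<in>S. \<exists>d\<in>S. a < c \<and> c < d \<and> d < b)" using e(5) unfolding length2_in_def by blast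
  have cov: "\<And>x. x \<in> S \<Longrightarrow> a < x \<Longrightarrow> x < b \<Longrightarrow> covers a x \<and> covers x b"
  proof -
    fix x assume x: "x \<in> S" "a < x" "x < b"
    have "covers_in S a x" using x nochain e(3) unfolding covers_in_def by blast
    moreover have "covers_in S x b" using x nochain e(4) unfolding covers_in_def by blast
    ultimately show "covers a x \<and> covers x b" using I1 x e(3,4) by blast
  qed
  have nj: "\<not> join_reducible_in S e" and nm: "\<not> meet_reducible_in S e"
    using e(2) unfolding doubly_irreducible_in_def reducible_in_def by auto
  have ua: "\<forall>z\<in>S. covers_in S z e \<longrightarrow> z = a"
  proof (intro ballI impI)
    fix z assume z: "z \<in> S" "covers_in S z e"
    have "covers_in S a e" using I1 cov[OF e(1,6,7)] e(1,3) by blast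
    show "z = a"
    proof (rule ccontr)
      assume "z \<noteq> a"
      then have "join_reducible_in S e" using two_lower_jr[OF _ _ z(2) \<open>covers_in S a e\<close>] cl z(1) e(3) by blast
      then show False using nj by simp
    qed
  qed
  have ub: "\<forall>z\<in>S. covers_in S e z \<longrightarrow> z = b"
  proof (intro ballI impI)
    fix z assume z: "z \<in> S" "covers_in S e z"
    have "covers_in S e b" using I1 cov[OF e(1,6,7)] e(1,4) by blast
    show "z = b"
    proof (rule ccontr)
      assume "z \<noteq> b"
      then have "meet_reducible_in S e" using two_upper_mr[OF _ _ z(2) \<open>covers_in S e b\<close>] cl z(1) e(4) by blast
      then show False using nm by simp
    qed
  qed
  have ne: "c1 \<noteq> c2" "c1 \<noteq> e" "c2 \<noteq> e" using e(14,15) by auto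
  show ?thesis
    apply (rule exI[of _ a], rule exI[of _ b], rule exI[of _ c1], rule exI[of _ c2])
    using e cov[OF e(1,6,7)] cov[OF e(8,10,11)] cov[OF e(9,12,13)] ne ua ub nj nm by blast
qed

lemma Inv_step:
  fixes S :: "'a::{finite,lattice} set"
  assumes I: "Inv S" and ey: "eye p S e"
  shows "Inv (S - {e})"
proof -
  have I1: "\<And>x y. x \<in> S \<Longrightarrow> y \<in> S \<Longrightarrow> covers_in S x y \<longleftrightarrow> covers x y" using I unfolding Inv_def by blast
  have cl: "\<And>x y. x \<in> S \<Longrightarrow> y \<in> S \<Longrightarrow> sup x y \<in> S \<and> inf x y \<in> S" using I unfolding Inv_def by blast
  have I2: "\<And>r. r \<notin> S \<Longrightarrow> (\<exists>a b c1 c2. ucov r a b \<and> a \<in> S \<and> b \<in> S \<and> c1 \<in> S \<and> c2 \<in> S \<and> c1 \<noteq> c2 \<and>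
        covers a c1 \<and> covers c1 b \<and> covers a c2 \<and> covers c2 b)" using I unfolding Inv_def by blast
  obtain a b c1 c2 where E: "a \<in> S" "b \<in> S" "c1 \<in> S" "c2 \<in> S" "e \<in> S" "covers a e" "covers e b"
     "covers a c1" "covers c1 b" "covers a c2" "covers c2 b" "c1 \<noteq> c2" "c1 \<noteq> e" "c2 \<noteq> e"
     "\<forall>z\<in>S. covers_in S z e \<longrightarrow> z = a" "\<forall>z\<in>S. covers_in S e z \<longrightarrow> z = b"
     "\<not> join_reducible_in S e" "\<not> meet_reducible_in S e"
    using eye_info[OF I ey] by blast
  have ae: "a < e" "e < b" "a \<noteq> e" "b \<noteq> e" using E(6,7) by (auto simp: covers_def)
  have below: "\<And>x. x \<in> S \<Longrightarrow> x < e \<Longrightarrow> x \<le> a"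
    using S_cov_down E(5,15) by blast
  have above: "\<And>x. x \<in> S \<Longrightarrow> e < x \<Longrightarrow> b \<le> x"
    using S_cov_up E(5,16) by blast
  have c1ab: "a < c1" "c1 < b" using E(8,9) by (auto simp: covers_def)
  have N1: "\<forall>x\<in>S - {e}. \<forall>y\<in>S - {e}. covers_in (S - {e}) x y \<longleftrightarrow> covers x y"
  proof (intro ballI)
    fix x y assume x: "x \<in> S - {e}" and y: "y \<in> S - {e}"
    show "covers_in (S - {e}) x y \<longleftrightarrow> covers x y"
    proof
      assume c: "covers x y"
      then have "covers_in S x y" using I1 x y by blast
      then show "covers_in (S - {e}) x y" using x y unfolding covers_in_def by blast
    next
      assume c: "covers_in (S - {e}) x y"
      have "covers_in S x y"
      proof (rule ccontr)
        assume "\<not> covers_in S x y"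
        then obtain z where z: "z \<in> S" "x < z" "z < y" using c x y unfolding covers_in_def by blast
        then have "z = e" using c unfolding covers_in_def by blast
        then have xe: "x < e" and ey: "e < y" using z by auto
        have xa: "x \<le> a" using below x xe by blast
        have by': "b \<le> y" using above y ey by blast
        have "x = a"
        proof (rule ccontr)
          assume "x \<noteq> a"
          then have "x < a" using xa by simp
          moreover have "a < y" using ae ey by simp
          ultimately show False using c E(1) ae(3) unfolding covers_in_def by blast
        qed
        moreover have "y = b"
        proof (rule ccontr)
          assume "y \<noteq> b"
          then have "b < y" using by' by simp
          moreover have "x < b" using ae xe by simp
          ultimately show False using c E(2) ae(4) unfolding covers_in_def by blast
        qed
        ultimately show False using c c1ab E(3,13) unfolding covers_in_def by blast
      qed
      then show "covers x y" using I1 x y by blast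
    qed
  qed
  have N2: "\<forall>x\<in>S - {e}. \<forall>y\<in>S - {e}. sup x y \<in> S - {e} \<and> inf x y \<in> S - {e}"
  proof (intro ballI conjI)
    fix x y assume x: "x \<in> S - {e}" and y: "y \<in> S - {e}"
    show "sup x y \<in> S - {e}"
    proof -
      have "sup x y \<noteq> e"
      proof
        assume s: "sup x y = e"
        then have "x < e" "y < e" using x y by (metis DiffD2 insertI1 order.not_eq_order_implies_strict sup_ge1 sup_ge2)+
        moreover have "is_lub_in S x y e" using s x y E(5) unfolding is_lub_in_def by auto
        ultimately have "join_reducible_in S e" using x y unfolding join_reducible_in_def by blast
        then show False using E(17) by simp
      qed
      then show ?thesis using cl x y by blast
    qed
    show "inf x y \<in> S - {e}"
    proof -
      have "inf x y \<noteq> e"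
      proof
        assume s: "inf x y = e"
        then have "e < x" "e < y" using x y by (metis DiffD2 insertI1 order.not_eq_order_implies_strict inf_le1 inf_le2)+
        moreover have "is_glb_in S x y e" using s x y E(5) unfolding is_glb_in_def by auto
        ultimately have "meet_reducible_in S e" using x y unfolding meet_reducible_in_def by blast
        then show False using E(18) by simp
      qed
      then show ?thesis using cl x y by blast
    qed
  qed
  have N3: "\<forall>r. r \<notin> S - {e} \<longrightarrow> (\<exists>a b c1 c2. ucov r a b \<and> a \<in> S - {e} \<and> b \<in> S - {e} \<and> c1 \<in> S - {e} \<and> c2 \<in> S - {e} \<and> c1 \<noteq> c2 \<and>
        covers a c1 \<and> covers c1 b \<and> covers a c2 \<and> covers c2 b)"
  proof (intro allI impI)
    fix r assume r: "r \<notin> S - {e}"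
    have new: "a \<in> S - {e} \<and> b \<in> S - {e} \<and> c1 \<in> S - {e} \<and> c2 \<in> S - {e} \<and> c1 \<noteq> c2 \<and>
        covers a c1 \<and> covers c1 b \<and> covers a c2 \<and> covers c2 b" using E ae by blast
    show "\<exists>a b c1 c2. ucov r a b \<and> a \<in> S - {e} \<and> b \<in> S - {e} \<and> c1 \<in> S - {e} \<and> c2 \<in> S - {e} \<and> c1 \<noteq> c2 \<and>
        covers a c1 \<and> covers c1 b \<and> covers a c2 \<and> covers c2 b"
    proof (cases "r = e")
      case True
      have "\<forall>z. covers z e \<longleftrightarrow> z = a"
      proof (intro allI iffI)
        fix z assume cz: "covers z e"
        show "z = a"
        proof (cases "z \<in> S")
          case True then show ?thesis using I1 cz E(5,15) by blast
        next
          case False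
          then obtain a' b' d1 d2 where W: "ucov z a' b'" "d1 \<in> S" "d2 \<in> S" "d1 \<noteq> d2" "covers d1 b'" "covers d2 b'"
            using I2 by blast
          have "b' = e" using W(1) cz by (simp add: ucov_def)
          then have "d1 = a" "d2 = a" using W I1 E(5,15) by blast+
          then show ?thesis using W(4) by simp
        qed
      next
        fix z assume "z = a" then show "covers z e" using E(6) by simp
      qed
      moreover have "\<forall>z. covers e z \<longleftrightarrow> z = b"
      proof (intro allI iffI)
        fix z assume cz: "covers e z"
        show "z = b"
        proof (cases "z \<in> S")
          case True then show ?thesis using I1 cz E(5,16) by blast
        next
          case False
          then obtain a' b' d1 d2 where W: "ucov z a' b'" "d1 \<in> S" "d2 \<in> S" "d1 \<noteq> d2" "covers a' d1" "covers a' d2"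
            using I2 by blast
          have "a' = e" using W(1) cz by (simp add: ucov_def)
          then have "d1 = b" "d2 = b" using W I1 E(5,16) by blast+
          then show ?thesis using W(4) by simp
        qed
      next
        fix z assume "z = b" then show "covers e z" using E(7) by simp
      qed
      ultimately have "ucov r a b" using True by (simp add: ucov_def)
      then show ?thesis using new by blast
    next
      case False
      then have rS: "r \<notin> S" using r by blast
      then obtain a' b' d1 d2 where W: "ucov r a' b'" "a' \<in> S" "b' \<in> S" "d1 \<in> S" "d2 \<in> S" "d1 \<noteq> d2"
        "covers a' d1" "covers d1 b'" "covers a' d2" "covers d2 b'"
        using I2 by blast
      have a'e: "a' \<noteq> e"
      proof
        assume "a' = e"
        then have "d1 = b" "d2 = b" using W I1 E(5,16) by blast+
        then show False using W(6) by simp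
      qed
      have b'e: "b' \<noteq> e"
      proof
        assume "b' = e"
        then have "d1 = a" "d2 = a" using W I1 E(5,15) by blast+
        then show False using W(6) by simp
      qed
      show ?thesis
      proof (cases "d1 = e \<or> d2 = e")
        case True
        then have "covers a' e" "covers e b'" using W by auto
        then have "a' = a" "b' = b" using I1 W(2,3) E(5,15,16) by blast+
        then show ?thesis using W(1) new by blast
      next
        case False
        then show ?thesis using W a'e b'e by blast
      qed
    qed
  qed
  show ?thesis unfolding Inv_def using N1 N2 N3 by blast
qed

lemma Inv_reach:
  fixes S :: "'a::{finite,lattice} set"
  assumes "(slimming_step p)\<^sup>*\<^sup>* UNIV S" shows "Inv S"
  using assms
proof (induction rule: rtranclp_induct)
  case base then show ?case by (rule Inv_UNIV)
next
  case (step y z)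
  then show ?case using Inv_step unfolding slimming_step_def by blast
qed

lemma sm1:
  fixes a :: "'a::{finite,lattice}"
  assumes sm: "semimodular TYPE('a)" and ac: "covers a ci" "covers ci b" "covers a c'"
    and ne: "c' \<noteq> ci" and ch: "c' \<le> c" "c < d" "d < b"
  shows False
proof -
  have S: "\<And>x y z::'a. covers x y \<Longrightarrow> sup x z = sup y z \<or> covers (sup x z) (sup y z)"
    using sm unfolding semimodular_def by blast
  have ab: "a < ci" "ci < b" "a < c'" using ac by (auto simp: covers_def)
  have c'b: "c' < b" using ch by (meson order.strict_trans1 order.strict_trans)
  have le: "sup ci c' \<le> b" using ab c'b by (simp add: less_imp_le)
  have "sup ci c' \<noteq> ci"
  proof
    assume "sup ci c' = ci"
    then have "c' \<le> ci" by (metis sup_ge2)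
    then have "c' < ci" using ne by simp
    then show False using ac(1) ab(3) unfolding covers_def by blast
  qed
  then have "ci < sup ci c'" by (simp add: order.strict_iff_order)
  then have sb: "sup ci c' = b"
  proof -
    assume l: "ci < sup ci c'"
    show ?thesis
    proof (rule ccontr)
      assume "sup ci c' \<noteq> b"
      then have "sup ci c' < b" using le by (simp add: order.strict_iff_order)
      then show False using l ac(2) unfolding covers_def by blast
    qed
  qed
  have sa: "sup a c' = c'" using ab by (simp add: less_imp_le sup_absorb2)
  have "c' = b \<or> covers c' b" using S[OF ac(1), of c'] sa sb by simp
  then show False
  proof
    assume "c' = b" then show False using c'b by simp
  next
    assume "covers c' b"
    moreover have "c' < d" using ch by (meson order.strict_trans1)
    ultimately show False using ch(3) unfolding covers_def by blast
  qed
qed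

lemma sm_len2:
  fixes a :: "'a::{finite,lattice}"
  assumes sm: "semimodular TYPE('a)" and c: "covers a c1" "covers c1 b" "covers a c2" "covers c2 b" "c1 \<noteq> c2"
    and ch: "a < c" "c < d" "d < b"
  shows False
proof -
  obtain c' where c': "covers a c'" "c' \<le> c" using cov_up[OF ch(1)] by blast
  show False
  proof (cases "c' = c1")
    case False
    then show False using sm1[OF sm c(1,2) c'(1) False c'(2) ch(2,3)] by blast
  next
    case True
    then have "c' \<noteq> c2" using c(5) by simp
    then show False using sm1[OF sm c(3,4) c'(1) _ c'(2) ch(2,3)] by blast
  qed
qed

lemma slope_inj0:
  fixes p :: "'a::order \<Rightarrow> real \<times> real"
  assumes pd: "planar_diagram p" and c: "covers a c" "covers a c'" "c \<noteq> c'"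
    and sl: "slope p a c = slope p a c'" and h: "snd (p c) \<le> snd (p c')"
  shows False
proof -
  have ya: "snd (p a) < snd (p c)" "snd (p a) < snd (p c')" using pd c unfolding planar_diagram_def by blast+
  define u where "u = (snd (p c) - snd (p a)) / (snd (p c') - snd (p a))"
  have u: "0 \<le> u" "u \<le> 1" using ya h by (auto simp: u_def field_simps)
  have s1: "snd ((1 - u) *\<^sub>R p a + u *\<^sub>R p c') = snd (p a) + u * (snd (p c') - snd (p a))"
    by (simp add: algebra_simps)
  have s2: "u * (snd (p c') - snd (p a)) = snd (p c) - snd (p a)" using ya by (simp add: u_def)
  have f1: "fst ((1 - u) *\<^sub>R p a + u *\<^sub>R p c') = fst (p a) + u * (fst (p c') - fst (p a))"
    by (simp add: algebra_simps)
  have f2: "fst (p c') - fst (p a) = slope p a c' * (snd (p c') - snd (p a))" using ya by (simp add: slope_def)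
  have f3: "fst (p c) - fst (p a) = slope p a c * (snd (p c) - snd (p a))" using ya by (simp add: slope_def)
  have "u * (fst (p c') - fst (p a)) = slope p a c * (u * (snd (p c') - snd (p a)))"
    using f2 sl by simp
  then have "u * (fst (p c') - fst (p a)) = fst (p c) - fst (p a)" using s2 f3 by simp
  then have "p c = (1 - u) *\<^sub>R p a + u *\<^sub>R p c'"
    using s1 s2 f1 by (simp add: prod_eq_iff)
  then have "p c \<in> closed_segment (p a) (p c')" using u by (auto simp: in_segment)
  moreover have "c \<noteq> a" using c by (auto simp: covers_def)
  ultimately show False using pd c unfolding planar_diagram_def by blast
qed

lemma slope_inj:
  fixes p :: "'a::order \<Rightarrow> real \<times> real"
  assumes pd: "planar_diagram p" and c: "covers a c" "covers a c'" "c \<noteq> c'"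
    and sl: "slope p a c = slope p a c'"
  shows False
proof (cases "snd (p c) \<le> snd (p c')")
  case True then show ?thesis using slope_inj0[OF pd c sl] by blast
next
  case False then show ?thesis using slope_inj0[OF pd c(2,1) _ sl[symmetric]] c(3) by auto
qed

definition Atm :: "'a::order \<Rightarrow> 'a \<Rightarrow> 'a set" where
  "Atm a b = {c. covers a c \<and> covers c b}"

lemma final_atoms:
  fixes S :: "'a::{finite,lattice} set"
  assumes sm: "semimodular TYPE('a)" and pd: "planar_diagram p" and I: "Inv S" and ne: "\<not> (\<exists>e. eye p S e)"
  shows "card (Atm a b \<inter> S) \<le> 2"
proof (rule ccontr)
  assume "\<not> ?thesis"
  then have c3: "card (Atm a b \<inter> S) \<ge> 3" by simp
  define X where "X = Atm a b \<inter> S"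
  have I1: "\<And>x y. x \<in> S \<Longrightarrow> y \<in> S \<Longrightarrow> covers_in S x y \<longleftrightarrow> covers x y" using I unfolding Inv_def by blast
  have I2: "\<And>r. r \<notin> S \<Longrightarrow> (\<exists>a b. ucov r a b)" using I unfolding Inv_def by blast
  have aS: "a \<in> S"
  proof (rule ccontr)
    assume "a \<notin> S"
    then obtain a' b' where u: "ucov a a' b'" using I2 by blast
    have "Atm a b \<inter> S \<subseteq> {b'}" using u by (auto simp: Atm_def ucov_def)
    then have "card (Atm a b \<inter> S) \<le> card {b'}" by (intro card_mono) simp_all
    then have "card (Atm a b \<inter> S) \<le> 1" by simp
    then show False using c3 by simp
  qed
  have bS: "b \<in> S"
  proof (rule ccontr)
    assume "b \<notin> S"
    then obtain a' b' where u: "ucov b a' b'" using I2 by blast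
    have "Atm a b \<inter> S \<subseteq> {a'}" using u by (auto simp: Atm_def ucov_def)
    then have "card (Atm a b \<inter> S) \<le> card {a'}" by (intro card_mono) simp_all
    then have "card (Atm a b \<inter> S) \<le> 1" by simp
    then show False using c3 by simp
  qed
  have Xne: "X \<noteq> {}" using c3 X_def by auto
  have fX: "finite X" by simp
  have "Min (slope p a ` X) \<in> slope p a ` X" using Xne by simp
  then obtain c1 where c1': "c1 \<in> X" "slope p a c1 = Min (slope p a ` X)" by (metis imageE)
  have c1: "c1 \<in> X" "\<forall>c\<in>X. slope p a c1 \<le> slope p a c" using c1' by auto
  have "Max (slope p a ` X) \<in> slope p a ` X" using Xne by simp
  then obtain c2 where c2': "c2 \<in> X" "slope p a c2 = Max (slope p a ` X)" by (metis imageE)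
  have c2: "c2 \<in> X" "\<forall>c\<in>X. slope p a c \<le> slope p a c2" using c2' by auto
  have "card (X - {c1, c2}) \<ge> card X - card {c1, c2}" by (rule diff_card_le_card_Diff) simp
  moreover have "card {c1, c2} \<le> 2" by (simp add: card_insert_le_m1)
  moreover have "card X \<ge> 3" using c3 X_def by simp
  ultimately have "card (X - {c1, c2}) \<ge> 1" by linarith
  then have "X - {c1, c2} \<noteq> {}" by (intro notI) simp
  then obtain e where e: "e \<in> X" "e \<noteq> c1" "e \<noteq> c2" by blast
  have cov: "\<And>c. c \<in> X \<Longrightarrow> covers a c \<and> covers c b \<and> c \<in> S" unfolding X_def Atm_def by blast
  have s1: "slope p a c1 < slope p a e"
  proof -
    have "slope p a c1 \<le> slope p a e" using c1 e by blast
    moreover have "slope p a c1 \<noteq> slope p a e" using slope_inj[OF pd, of a c1 e] cov c1(1) e by auto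
    ultimately show ?thesis by simp
  qed
  have s2: "slope p a e < slope p a c2"
  proof -
    have "slope p a e \<le> slope p a c2" using c2 e by blast
    moreover have "slope p a e \<noteq> slope p a c2" using slope_inj[OF pd, of a e c2] cov c2(1) e by auto
    ultimately show ?thesis by simp
  qed
  have c12: "c1 \<noteq> c2" using s1 s2 by auto
  interpret g: geo p a c1 e c2 b
    by unfold_locales (use pd cov c1(1) c2(1) e s1 s2 in auto)
  have eS: "e \<in> S" using cov e by blast
  have ae: "a < e" "e < b" using cov e(1) by (auto simp: covers_def)
  have nj: "\<not> join_reducible_in S e"
  proof
    assume "join_reducible_in S e"
    then obtain y z where yz: "y \<in> S" "z \<in> S" "y < e" "z < e" "is_lub_in S y z e"
      unfolding join_reducible_in_def by blast
    have "y \<le> a"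
    proof -
      obtain m where "y \<le> m" "covers m e" using cov_down[OF yz(3)] by blast
      then show ?thesis using g.down_unique by blast
    qed
    moreover have "z \<le> a"
    proof -
      obtain m where "z \<le> m" "covers m e" using cov_down[OF yz(4)] by blast
      then show ?thesis using g.down_unique by blast
    qed
    ultimately have "e \<le> a" using yz(5) aS unfolding is_lub_in_def by blast
    then show False using ae by simp
  qed
  have nm: "\<not> meet_reducible_in S e"
  proof
    assume "meet_reducible_in S e"
    then obtain y z where yz: "y \<in> S" "z \<in> S" "e < y" "e < z" "is_glb_in S y z e"
      unfolding meet_reducible_in_def by blast
    have "b \<le> y"
    proof -
      obtain m where "covers e m" "m \<le> y" using cov_up[OF yz(3)] by blast
      then show ?thesis using g.up_unique by blast
    qed
    moreover have "b \<le> z"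
    proof -
      obtain m where "covers e m" "m \<le> z" using cov_up[OF yz(4)] by blast
      then show ?thesis using g.up_unique by blast
    qed
    ultimately have "b \<le> e" using yz(5) bS unfolding is_glb_in_def by blast
    then show False using ae by simp
  qed
  have di: "doubly_irreducible_in S e" using nj nm unfolding doubly_irreducible_in_def reducible_in_def by blast
  have l2: "length2_in S a b"
  proof -
    have "a < c1" "c1 < b" using cov c1(1) by (auto simp: covers_def)
    moreover have "\<not> (\<exists>c\<in>S. \<exists>d\<in>S. a < c \<and> c < d \<and> d < b)"
      using sm_len2[OF sm _ _ _ _ c12] cov c1(1) c2(1) by blast
    ultimately show ?thesis unfolding length2_in_def using aS bS cov c1(1) by (auto intro: order.strict_trans)
  qed
  have "eye p S e"
    unfolding eye_def
    apply (rule conjI[OF eS], rule conjI[OF di])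
    apply (rule bexI[of _ a], rule bexI[of _ b])
    using l2 ae cov c1(1) c2(1) s1 s2 aS bS by (auto simp: covers_def)
  then show False using ne by blast
qed

lemma ex_surj: "surj f \<Longrightarrow> (\<exists>y. Q y) = (\<exists>x. Q (f x))"
  by (metis surjD)

lemma all_surj: "surj f \<Longrightarrow> (\<forall>y. Q y) = (\<forall>x. Q (f x))"
  by (metis surjD)

locale oiso =
  fixes f :: "'a::lattice \<Rightarrow> 'b::lattice"
  assumes bij: "bij f" and le: "\<And>x y. f x \<le> f y \<longleftrightarrow> x \<le> y"
begin

lemma inj: "inj f" using bij by (simp add: bij_def)
lemma surj: "surj f" using bij by (simp add: bij_def)

lemma eq_iff [simp]: "f x = f y \<longleftrightarrow> x = y" using inj by (auto dest: injD)
lemma le_iff [simp]: "f x \<le> f y \<longleftrightarrow> x \<le> y" by (rule le)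
lemma less_iff [simp]: "f x < f y \<longleftrightarrow> x < y" by (auto simp: order.strict_iff_order)

lemma covers_iff [simp]: "covers (f x) (f y) \<longleftrightarrow> covers x y"
  unfolding covers_def using ex_surj[OF surj, of "\<lambda>z. f x < z \<and> z < f y"] by simp

lemma sup_f: "f (sup x y) = sup (f x) (f y)"
proof (rule order.antisym)
  show "sup (f x) (f y) \<le> f (sup x y)" by simp
  obtain z where z: "f z = sup (f x) (f y)" using surj by (metis surjD)
  have "x \<le> z" "y \<le> z" using z by (metis le_iff sup_ge1 sup_ge2)+
  then have "sup x y \<le> z" by simp
  then show "f (sup x y) \<le> sup (f x) (f y)" using z by (metis le_iff)
qed

lemma inf_f: "f (inf x y) = inf (f x) (f y)"
proof (rule order.antisym)
  show "f (inf x y) \<le> inf (f x) (f y)" by simp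
  obtain z where z: "f z = inf (f x) (f y)" using surj by (metis surjD)
  have "z \<le> x" "z \<le> y" using z by (metis le_iff inf_le1 inf_le2)+
  then have "z \<le> inf x y" by simp
  then show "inf (f x) (f y) \<le> f (inf x y)" using z by (metis le_iff)
qed

lemma liso: "lattice_iso f"
  unfolding lattice_iso_def using bij sup_f inf_f by blast

lemma ucov_iff [simp]: "ucov (f r) (f a) (f b) \<longleftrightarrow> ucov r a b"
  unfolding ucov_def using all_surj[OF surj, of "\<lambda>z. covers z (f r) = (z = f a)"]
    all_surj[OF surj, of "\<lambda>z. covers (f r) z = (z = f b)"] by simp

lemma Atm_img: "f ` Atm a b = Atm (f a) (f b)"
proof
  show "f ` Atm a b \<subseteq> Atm (f a) (f b)" by (auto simp: Atm_def)
  show "Atm (f a) (f b) \<subseteq> f ` Atm a b"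
  proof
    fix y assume y: "y \<in> Atm (f a) (f b)"
    obtain x where "y = f x" using surj by (metis surjD)
    then show "y \<in> f ` Atm a b" using y by (auto simp: Atm_def)
  qed
qed

lemma card_Atm: "card (Atm (f a) (f b)) = card (Atm a b)"
  using Atm_img[of a b] card_image[OF inj_on_subset[OF inj subset_UNIV]] by metis

end

lemma liso_oiso:
  fixes f :: "'a::lattice \<Rightarrow> 'b::lattice"
  assumes "lattice_iso f" shows "oiso f"
proof
  show b: "bij f" using assms by (simp add: lattice_iso_def)
  fix x y
  have s: "f (sup x y) = sup (f x) (f y)" using assms by (simp add: lattice_iso_def)
  have i: "inj f" using b by (simp add: bij_def)
  have "x \<le> y \<longleftrightarrow> sup x y = y" by (simp add: le_iff_sup)
  also have "\<dots> \<longleftrightarrow> f (sup x y) = f y" using i by (auto dest: injD)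
  also have "\<dots> \<longleftrightarrow> f x \<le> f y" using s by (simp add: le_iff_sup)
  finally show "f x \<le> f y \<longleftrightarrow> x \<le> y" by simp
qed

lemma oiso_comp:
  fixes f :: "'a::lattice \<Rightarrow> 'b::lattice" and g :: "'b \<Rightarrow> 'c::lattice"
  assumes "oiso f" "oiso g" shows "oiso (g \<circ> f)"
  using assms unfolding oiso_def by (auto intro: bij_comp)

lemma nu_iso:
  fixes f :: "'a::lattice \<Rightarrow> 'b::lattice"
  assumes o: "oiso f" and img: "f ` S = S'"
  shows "nu S' (f x) = nu S x"
proof -
  interpret oiso f by (rule o)
  have memS: "\<And>u. f u \<in> S' \<longleftrightarrow> u \<in> S" using img by auto
  have cin: "\<And>u v. covers_in S' (f u) (f v) \<longleftrightarrow> covers_in S u v"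
  proof -
    fix u v
    have "(\<exists>z\<in>S'. f u < z \<and> z < f v) \<longleftrightarrow> (\<exists>z\<in>S. u < z \<and> z < v)"
      using ex_surj[OF surj, of "\<lambda>z. z \<in> S' \<and> f u < z \<and> z < f v"] memS by auto
    then show "covers_in S' (f u) (f v) \<longleftrightarrow> covers_in S u v" unfolding covers_in_def using memS by simp
  qed
  define P where "P = (\<lambda>e. e \<notin> S \<and> (\<exists>c1 c2 t. c1 \<noteq> c2 \<and> covers_in S x c1 \<and> covers_in S x c2 \<and>
       covers_in S c1 t \<and> covers_in S c2 t \<and> x < e \<and> e < t))"
  define P' where "P' = (\<lambda>e. e \<notin> S' \<and> (\<exists>c1 c2 t. c1 \<noteq> c2 \<and> covers_in S' (f x) c1 \<and> covers_in S' (f x) c2 \<and>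
       covers_in S' c1 t \<and> covers_in S' c2 t \<and> f x < e \<and> e < t))"
  have PP: "\<And>e. P' (f e) \<longleftrightarrow> P e"
  proof -
    fix e
    have "P' (f e) \<longleftrightarrow> f e \<notin> S' \<and> (\<exists>c1 c2 t. f c1 \<noteq> f c2 \<and> covers_in S' (f x) (f c1) \<and> covers_in S' (f x) (f c2) \<and>
       covers_in S' (f c1) (f t) \<and> covers_in S' (f c2) (f t) \<and> f x < f e \<and> f e < f t)"
      unfolding P'_def
      using ex_surj[OF surj, of "\<lambda>c1. \<exists>c2 t. c1 \<noteq> c2 \<and> covers_in S' (f x) c1 \<and> covers_in S' (f x) c2 \<and>
       covers_in S' c1 t \<and> covers_in S' c2 t \<and> f x < f e \<and> f e < t"]
        ex_surj[OF surj, of "\<lambda>c2. \<exists>t. _ \<noteq> c2 \<and> _ \<and> covers_in S' (f x) c2 \<and> _ \<and> covers_in S' c2 t \<and> _ \<and> f e < t"]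
      by (smt (verit) surjD surj)
    also have "\<dots> \<longleftrightarrow> P e" unfolding P_def using memS cin by simp
    finally show "P' (f e) \<longleftrightarrow> P e" .
  qed
  have "{e. P' e} = f ` {e. P e}"
  proof
    show "{e. P' e} \<subseteq> f ` {e. P e}"
    proof
      fix y assume "y \<in> {e. P' e}"
      moreover obtain e where "y = f e" using surj by (metis surjD)
      ultimately show "y \<in> f ` {e. P e}" using PP by auto
    qed
    show "f ` {e. P e} \<subseteq> {e. P' e}" using PP by auto
  qed
  then have "card {e. P' e} = card {e. P e}"
    using card_image[OF inj_on_subset[OF inj subset_UNIV]] by metis
  then show ?thesis unfolding nu_def P_def P'_def by simp
qed

lemma class_bij_aux:
  fixes R :: "'a \<Rightarrow> 'a \<Rightarrow> bool"
  assumes sy: "\<And>x y. R x y \<Longrightarrow> R y x" and tr: "\<And>x y z. R x y \<Longrightarrow> R y z \<Longrightarrow> R x z" and rf: "\<And>x. R x x"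
    and fX: "finite X"
  shows "finite Y \<Longrightarrow> (\<forall>x. card {y\<in>X. R y x} = card {y\<in>Y. R y x}) \<Longrightarrow> \<exists>f. inj_on f X \<and> f ` X = Y \<and> (\<forall>x\<in>X. R (f x) x)"
  using fX
proof (induction X arbitrary: Y rule: finite_induct)
  case empty
  have "Y = {}"
  proof (rule ccontr)
    assume "Y \<noteq> {}"
    then obtain y where y: "y \<in> Y" by blast
    have "{y'\<in>Y. R y' y} \<noteq> {}" using y rf by blast
    moreover have "finite {y'\<in>Y. R y' y}" using empty.prems(1) by simp
    ultimately have "card {y'\<in>Y. R y' y} \<noteq> 0" by simp
    then show False using empty.prems(2) by simp
  qed
  then show ?case by simp
next
  case (insert x X)
  have fY: "finite Y" by fact
  have "{y\<in>insert x X. R y x} \<noteq> {}" using rf by blast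
  then have "card {y\<in>insert x X. R y x} \<noteq> 0" using insert.hyps(1) by simp
  then have "card {y\<in>Y. R y x} \<noteq> 0" using insert.prems(2) by simp
  then obtain y0 where y0: "y0 \<in> Y" "R y0 x" by (metis (no_types, lifting) card.empty empty_Collect_eq)
  have cond: "\<forall>z. card {y\<in>X. R y z} = card {y\<in>Y - {y0}. R y z}"
  proof
    fix z
    have e1: "card {y\<in>insert x X. R y z} = card {y\<in>X. R y z} + (if R x z then 1 else 0)"
    proof (cases "R x z")
      case True
      then have "{y\<in>insert x X. R y z} = insert x {y\<in>X. R y z}" by auto
      then show ?thesis using True insert.hyps by simp
    next
      case False
      then have "{y\<in>insert x X. R y z} = {y\<in>X. R y z}" by auto
      then show ?thesis using False by simp
    qed
    have e2: "card {y\<in>Y. R y z} = card {y\<in>Y - {y0}. R y z} + (if R y0 z then 1 else 0)"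
    proof (cases "R y0 z")
      case True
      then have "{y\<in>Y. R y z} = insert y0 {y\<in>Y - {y0}. R y z}" using y0 by auto
      then show ?thesis using True fY by simp
    next
      case False
      then have "{y\<in>Y. R y z} = {y\<in>Y - {y0}. R y z}" by auto
      then show ?thesis using False by simp
    qed
    have "R x z \<longleftrightarrow> R y0 z" using y0(2) sy tr by blast
    then show "card {y\<in>X. R y z} = card {y\<in>Y - {y0}. R y z}" using e1 e2 insert.prems(2)[rule_format, of z] by simp
  qed
  obtain f where f: "inj_on f X" "f ` X = Y - {y0}" "\<forall>x\<in>X. R (f x) x"
    using insert.IH[of "Y - {y0}"] cond fY by auto
  define g where "g = f(x := y0)"
  have gX: "\<And>z. z \<in> X \<Longrightarrow> g z = f z" using insert.hyps(2) by (auto simp: g_def)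
  have "inj_on g X" using f(1) gX inj_on_cong by blast
  moreover have "g ` X = Y - {y0}" using f(2) gX by (metis image_cong)
  moreover have "g x = y0" by (simp add: g_def)
  ultimately have "inj_on g (insert x X)" "g ` insert x X = Y"
    using y0(1) insert.hyps(2) by (auto simp: inj_on_insert)
  moreover have "\<forall>z\<in>insert x X. R (g z) z" using f(3) gX y0(2) \<open>g x = y0\<close> by auto
  ultimately show ?case by blast
qed

lemma class_perm:
  fixes R :: "'a::finite \<Rightarrow> 'a \<Rightarrow> bool"
  assumes sy: "\<And>x y. R x y \<Longrightarrow> R y x" and tr: "\<And>x y z. R x y \<Longrightarrow> R y z \<Longrightarrow> R x z" and rf: "\<And>x. R x x"
    and cnt: "\<And>x. card {y\<in>X. R y x} = card {y\<in>Y. R y x}"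
  shows "\<exists>\<pi>. bij \<pi> \<and> (\<forall>x. R (\<pi> x) x) \<and> \<pi> ` X = Y"
proof -
  have "\<exists>f. inj_on f X \<and> f ` X = Y \<and> (\<forall>x\<in>X. R (f x) x)"
    apply (rule class_bij_aux[where R=R])
         apply (erule sy) apply (erule (1) tr) apply (rule rf) apply simp apply simp
    using cnt by blast
  then obtain f where f: "inj_on f X" "f ` X = Y" "\<forall>x\<in>X. R (f x) x" by blast
  have cnt2: "\<forall>x. card {y\<in>-X. R y x} = card {y\<in>-Y. R y x}"
  proof
    fix x
    have a: "{y\<in>-X. R y x} = {y. R y x} - {y\<in>X. R y x}" by auto
    have b: "{y\<in>-Y. R y x} = {y. R y x} - {y\<in>Y. R y x}" by auto
    have c1: "card ({y. R y x} - {y\<in>X. R y x}) = card {y. R y x} - card {y\<in>X. R y x}"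
      by (rule card_Diff_subset) auto
    have c2: "card ({y. R y x} - {y\<in>Y. R y x}) = card {y. R y x} - card {y\<in>Y. R y x}"
      by (rule card_Diff_subset) auto
    show "card {y\<in>-X. R y x} = card {y\<in>-Y. R y x}"
      unfolding a b c1 c2 using cnt[of x] by simp
  qed
  have "\<exists>g. inj_on g (-X) \<and> g ` (-X) = -Y \<and> (\<forall>x\<in>-X. R (g x) x)"
    apply (rule class_bij_aux[where R=R])
         apply (erule sy) apply (erule (1) tr) apply (rule rf) apply simp apply simp
    using cnt2 by blast
  then obtain g where g: "inj_on g (-X)" "g ` (-X) = -Y" "\<forall>x\<in>-X. R (g x) x" by blast
  define \<pi> where "\<pi> = (\<lambda>z. if z \<in> X then f z else g z)"
  have "\<pi> ` X = f ` X" unfolding \<pi>_def by (rule image_cong) auto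
  then have i1: "\<pi> ` X = Y" using f(2) by simp
  have "\<pi> ` (-X) = g ` (-X)" unfolding \<pi>_def by (rule image_cong) auto
  then have i2: "\<pi> ` (-X) = -Y" using g(2) by simp
  have su: "surj \<pi>"
  proof -
    have "UNIV = \<pi> ` X \<union> \<pi> ` (-X)" using i1 i2 by auto
    also have "\<dots> = \<pi> ` UNIV" by auto
    finally show ?thesis by simp
  qed
  have "inj \<pi>" using su finite_surj_inj[of UNIV \<pi>] by simp
  then have "bij \<pi>" using su by (simp add: bij_def)
  moreover have "\<forall>x. R (\<pi> x) x" using f(3) g(3) unfolding \<pi>_def by auto
  ultimately show ?thesis using i1 by blast
qed

definition TW :: "'a::order \<Rightarrow> 'a \<Rightarrow> bool" where
  "TW x y \<longleftrightarrow> x = y \<or> (\<exists>a b. ucov x a b \<and> ucov y a b)"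

lemma TW_sym: "TW x y \<Longrightarrow> TW y x" unfolding TW_def by blast
lemma TW_trans: "TW x y \<Longrightarrow> TW y z \<Longrightarrow> TW x z"
  unfolding TW_def by (metis ucov_unique)
lemma TW_refl: "TW x x" unfolding TW_def by blast

lemma twin_le:
  fixes x :: "'a::{finite,lattice}"
  assumes tx: "TW x x'" and ty: "TW y y'" and eq: "x = y \<longleftrightarrow> x' = y'" and le: "x \<le> y"
  shows "x' \<le> y'"
proof (cases "x = y")
  case True then show ?thesis using eq by simp
next
  case False
  then have ne': "x' \<noteq> y'" using eq by simp
  show ?thesis
  proof (cases "x' = x")
    case xx: True
    show ?thesis
    proof (cases "y' = y")
      case True then show ?thesis using xx le by simp
    next
      case False
      then obtain c d where u: "ucov y c d" "ucov y' c d" using ty unfolding TW_def by blast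
      have "x \<le> c" using ucov_le[OF u(1), of x] le \<open>x \<noteq> y\<close> by simp
      then show ?thesis using ucov_le[OF u(2), of x] ne' xx by simp
    qed
  next
    case xx: False
    then obtain a b where ux: "ucov x a b" "ucov x' a b" using tx unfolding TW_def by metis
    have by': "b \<le> y" using ucov_le[OF ux(1), of y] le \<open>x \<noteq> y\<close> by auto
    show ?thesis
    proof (cases "y' = y")
      case True then show ?thesis using ucov_le[OF ux(2), of y] by' ne' by simp
    next
      case False
      then obtain c d where u: "ucov y c d" "ucov y' c d" using ty unfolding TW_def by blast
      have "b \<noteq> y"
      proof
        assume "b = y"
        have "covers x b" "covers x' b" using ux ucov_covers by blast+
        then have "x = c" "x' = c" using u(1) \<open>b = y\<close> unfolding ucov_def by blast+
        then show False using xx by simp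
      qed
      then have "b \<le> c" using ucov_le[OF u(1), of b] by' by simp
      then have "b \<le> y'" using ucov_le[OF u(2), of b] ucov_covers[OF u(2)] by (auto simp: covers_def intro: order.trans less_imp_le)
      then show ?thesis using ucov_le[OF ux(2), of y'] ne' by simp
    qed
  qed
qed

lemma atm_notS:
  assumes I: "Inv S" and y: "y \<notin> S"
  shows "y \<in> Atm a b \<longleftrightarrow> ucov y a b"
proof
  assume ya: "y \<in> Atm a b"
  obtain a' b' where u: "ucov y a' b'" using I y unfolding Inv_def by blast
  have "a = a'" "b = b'" using u ya unfolding Atm_def ucov_def by blast+
  then show "ucov y a b" using u by simp
next
  assume "ucov y a b" then show "y \<in> Atm a b" unfolding Atm_def using ucov_covers by blast
qed

lemma card_final:
  fixes S :: "'a::{finite,lattice} set"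
  assumes sm: "semimodular TYPE('a)" and pd: "planar_diagram p" and I: "Inv S" and ne: "\<not> (\<exists>e. eye p S e)"
  shows "card (Atm a b - S) = card (Atm a b) - min (card (Atm a b)) 2"
proof -
  have le2: "card (Atm a b \<inter> S) \<le> 2" by (rule final_atoms[OF sm pd I ne])
  have d: "card (Atm a b - S) = card (Atm a b) - card (Atm a b \<inter> S)" by (simp add: card_Diff_subset_Int)
  have "card (Atm a b \<inter> S) = min (card (Atm a b)) 2"
  proof (cases "Atm a b - S = {}")
    case True
    then have "Atm a b \<inter> S = Atm a b" by blast
    then show ?thesis using le2 by simp
  next
    case False
    then obtain r where r: "r \<in> Atm a b" "r \<notin> S" by blast
    have ur: "ucov r a b" using atm_notS[OF I r(2)] r(1) by simp
    obtain a' b' c1 c2 where W: "ucov r a' b'" "c1 \<in> S" "c2 \<in> S" "c1 \<noteq> c2"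
        "covers a' c1" "covers c1 b'" "covers a' c2" "covers c2 b'"
      using I r(2) unfolding Inv_def by blast
    have "a' = a" "b' = b" using ucov_unique[OF W(1) ur] by auto
    then have cA: "c1 \<in> Atm a b" "c2 \<in> Atm a b" using W unfolding Atm_def by auto
    have "card {c1, c2} \<le> card (Atm a b \<inter> S)" by (rule card_mono) (use cA W in auto)
    then have k2: "card (Atm a b \<inter> S) = 2" using le2 W(4) by simp
    have k3: "card {r, c1, c2} \<le> card (Atm a b)" by (rule card_mono) (use cA r in auto)
    have "r \<noteq> c1" "r \<noteq> c2" using W(2,3) r(2) by auto
    then have "card (Atm a b) \<ge> 3" using W(4) k3 by (simp add: card_insert_if)
    then show ?thesis using k2 by simp
  qed
  then show ?thesis using d by simp
qed

lemma mainG: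
  fixes p :: "'a::{finite,lattice} \<Rightarrow> real \<times> real" and q :: "'b::{finite,lattice} \<Rightarrow> real \<times> real"
    and S :: "'a set" and S' :: "'b set" and \<phi> :: "'a \<Rightarrow> 'b"
  assumes sma: "semimodular TYPE('a)" and smb: "semimodular TYPE('b)"
    and pdp: "planar_diagram p" and pdq: "planar_diagram q"
    and fs: "full_slimming p S" and fs': "full_slimming q S'" and li: "lattice_iso \<phi>"
  shows "\<exists>\<pi>::'a\<Rightarrow>'a. lattice_iso \<pi> \<and> (\<forall>x. reducible_in UNIV x \<longrightarrow> \<pi> x = x) \<and>
     lattice_iso_on (\<phi> \<circ> \<pi>) S S' \<and> (\<forall>x\<in>S. nu S x = nu S' ((\<phi> \<circ> \<pi>) x))"
proof -
  have I: "Inv S" and ne: "\<not> (\<exists>e. eye p S e)" using fs Inv_reach unfolding full_slimming_def by blast+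
  have I': "Inv S'" and ne': "\<not> (\<exists>e. eye q S' e)" using fs' Inv_reach unfolding full_slimming_def by blast+
  have oF: "oiso \<phi>" by (rule liso_oiso[OF li])
  interpret F: oiso \<phi> by (rule oF)
  define X where "X = - S"
  define Y where "Y = {y. \<phi> y \<notin> S'}"
  have XU: "\<And>y. y \<notin> S \<Longrightarrow> \<exists>a b. ucov y a b" using I unfolding Inv_def by blast
  have YU: "\<And>y. y \<notin> S' \<Longrightarrow> \<exists>a b. ucov y a b" using I' unfolding Inv_def by blast
  have cnt: "\<And>x. card {y\<in>X. TW y x} = card {y\<in>Y. TW y x}"
  proof -
    fix x
    show "card {y\<in>X. TW y x} = card {y\<in>Y. TW y x}"
    proof (cases "\<exists>a b. ucov x a b")
      case True
      then obtain a b where u: "ucov x a b" by blast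
      have tw: "\<And>y. TW y x \<longleftrightarrow> ucov y a b"
        unfolding TW_def using u ucov_unique by metis
      have e1: "{y\<in>X. TW y x} = Atm a b - S"
        using tw atm_notS[OF I] unfolding X_def by auto
      have e2: "\<phi> ` {y\<in>Y. TW y x} = Atm (\<phi> a) (\<phi> b) - S'"
      proof
        show "\<phi> ` {y\<in>Y. TW y x} \<subseteq> Atm (\<phi> a) (\<phi> b) - S'"
          using tw atm_notS[OF I'] unfolding Y_def by auto
        show "Atm (\<phi> a) (\<phi> b) - S' \<subseteq> \<phi> ` {y\<in>Y. TW y x}"
        proof
          fix z assume z: "z \<in> Atm (\<phi> a) (\<phi> b) - S'"
          obtain y where y: "z = \<phi> y" using F.surj by (metis surjD)
          have "ucov y a b" using z y atm_notS[OF I', of "\<phi> y"] by auto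
          then show "z \<in> \<phi> ` {y\<in>Y. TW y x}" using y z tw unfolding Y_def by auto
        qed
      qed
      have "card {y\<in>Y. TW y x} = card (\<phi> ` {y\<in>Y. TW y x})"
        by (rule card_image[symmetric]) (rule inj_on_subset[OF F.inj subset_UNIV])
      also have "\<dots> = card (Atm (\<phi> a) (\<phi> b)) - min (card (Atm (\<phi> a) (\<phi> b))) 2"
        unfolding e2 by (rule card_final[OF smb pdq I' ne'])
      also have "\<dots> = card (Atm a b) - min (card (Atm a b)) 2" by (simp add: F.card_Atm)
      also have "\<dots> = card (Atm a b - S)" by (rule card_final[OF sma pdp I ne, symmetric])
      finally show ?thesis unfolding e1 by simp
    next
      case False
      have e1: "{y\<in>X. TW y x} = {}"
      proof -
        have "\<And>y. y \<in> X \<Longrightarrow> TW y x \<Longrightarrow> False"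
        proof -
          fix y assume y: "y \<in> X" "TW y x"
          have "y = x" using y(2) False unfolding TW_def by blast
          then show False using XU y(1) False unfolding X_def by blast
        qed
        then show ?thesis by blast
      qed
      have e2: "{y\<in>Y. TW y x} = {}"
      proof -
        have "\<And>y. y \<in> Y \<Longrightarrow> TW y x \<Longrightarrow> False"
        proof -
          fix y assume y: "y \<in> Y" "TW y x"
          have yx: "y = x" using y(2) False unfolding TW_def by blast
          obtain a' b' where u: "ucov (\<phi> x) a' b'" using YU y(1) yx unfolding Y_def by blast
          obtain a0 where a0: "a' = \<phi> a0" using F.surj by (metis surjD)
          obtain b0 where b0: "b' = \<phi> b0" using F.surj by (metis surjD)
          have "ucov x a0 b0" using u a0 b0 by simp
          then show False using False by blast
        qed
        then show ?thesis by blast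
      qed
      show ?thesis unfolding e1 e2 by (rule refl)
    qed
  qed
  have "\<exists>\<pi>. bij \<pi> \<and> (\<forall>x. TW (\<pi> x) x) \<and> \<pi> ` X = Y"
    apply (rule class_perm[where R=TW])
       apply (erule TW_sym) apply (erule (1) TW_trans) apply (rule TW_refl) apply (rule cnt)
    done
  then obtain \<pi> where pi: "bij \<pi>" "\<forall>x. TW (\<pi> x) x" "\<pi> ` X = Y" by blast
  have ipi: "inj \<pi>" using pi(1) by (simp add: bij_def)
  have ple: "\<And>x y. \<pi> x \<le> \<pi> y \<longleftrightarrow> x \<le> y"
  proof -
    fix x y :: 'a
    have eq: "x = y \<longleftrightarrow> \<pi> x = \<pi> y" using ipi by (auto dest: injD)
    have 1: "\<pi> x \<le> \<pi> y \<Longrightarrow> x \<le> y"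
      using twin_le[of "\<pi> x" x "\<pi> y" y] pi(2) eq by blast
    have 2: "x \<le> y \<Longrightarrow> \<pi> x \<le> \<pi> y"
      using twin_le[of x "\<pi> x" y "\<pi> y"] pi(2) eq TW_sym by blast
    show "\<pi> x \<le> \<pi> y \<longleftrightarrow> x \<le> y" using 1 2 by blast
  qed
  have oP: "oiso \<pi>" using pi(1) ple by unfold_locales auto
  interpret Pi: oiso \<pi> by (rule oP)
  have red: "\<forall>x. reducible_in UNIV x \<longrightarrow> \<pi> x = x"
  proof (intro allI impI)
    fix x :: 'a assume r: "reducible_in UNIV x"
    show "\<pi> x = x"
    proof (rule ccontr)
      assume "\<pi> x \<noteq> x"
      then obtain a b where "ucov x a b" using pi(2) unfolding TW_def by blast
      then show False using ucov_not_red r by blast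
    qed
  qed
  have oC: "oiso (\<phi> \<circ> \<pi>)" by (rule oiso_comp[OF oP oF])
  interpret C: oiso "\<phi> \<circ> \<pi>" by (rule oC)
  have "\<pi> ` S = - Y"
  proof -
    have "\<pi> ` (- X) = - (\<pi> ` X)" by (rule bij_image_Compl_eq[OF pi(1)])
    then show ?thesis using pi(3) unfolding X_def by simp
  qed
  moreover have "\<phi> ` (- Y) = S'"
  proof
    show "\<phi> ` (- Y) \<subseteq> S'" unfolding Y_def by auto
    show "S' \<subseteq> \<phi> ` (- Y)"
    proof
      fix z assume z: "z \<in> S'"
      obtain y where "z = \<phi> y" using F.surj by (metis surjD)
      then show "z \<in> \<phi> ` (- Y)" using z unfolding Y_def by auto
    qed
  qed
  ultimately have img: "(\<phi> \<circ> \<pi>) ` S = S'" by (metis image_comp)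
  have lio: "lattice_iso_on (\<phi> \<circ> \<pi>) S S'"
    unfolding lattice_iso_on_def bij_betw_def
    using img inj_on_subset[OF C.inj subset_UNIV] C.sup_f C.inf_f by blast
  have "\<forall>x\<in>S. nu S x = nu S' ((\<phi> \<circ> \<pi>) x)" using nu_iso[OF oC img] by simp
  then show ?thesis using Pi.liso red lio by blast
qed

lemma incomp_atoms:
  fixes c1 :: "'a::order"
  assumes "covers a c1" "covers a c2" "c1 \<noteq> c2" shows "\<not> c1 \<le> c2"
proof
  assume "c1 \<le> c2"
  then have "c1 < c2" using assms(3) by simp
  moreover have "a < c1" using assms(1) by (simp add: covers_def)
  ultimately show False using assms(2) unfolding covers_def by blast
qed

lemma inf_atoms:
  fixes c1 :: "'a::lattice"
  assumes "covers a c1" "covers a c2" "c1 \<noteq> c2" shows "inf c1 c2 = a"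
proof -
  have "a \<le> inf c1 c2" using assms by (simp add: covers_def less_imp_le)
  moreover have "inf c1 c2 \<noteq> c1" using incomp_atoms[OF assms] by (metis inf_le2)
  then have "inf c1 c2 < c1" by (simp add: order.strict_iff_order)
  ultimately show ?thesis using assms(1) unfolding covers_def by (metis order.not_eq_order_implies_strict)
qed

lemma sup_atoms:
  fixes c1 :: "'a::lattice"
  assumes "covers c1 b" "covers c2 b" "c1 \<noteq> c2" shows "sup c1 c2 = b"
proof -
  have nle: "\<not> c1 \<le> c2"
  proof
    assume "c1 \<le> c2"
    then have "c1 < c2" using assms(3) by simp
    moreover have "c2 < b" using assms(2) by (simp add: covers_def)
    ultimately show False using assms(1) unfolding covers_def by blast
  qed
  have "sup c1 c2 \<le> b" using assms by (simp add: covers_def less_imp_le)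
  moreover have "sup c1 c2 \<noteq> c2" using nle by (metis sup_ge1)
  then have "c2 < sup c1 c2" by (simp add: order.strict_iff_order)
  ultimately show ?thesis using assms(2) unfolding covers_def by (metis order.not_eq_order_implies_strict)
qed

lemma glued:
  fixes S :: "'a::{finite,lattice} set"
  assumes I: "Inv S"
  shows "glued_sum_indecomposable_in (UNIV :: 'a set) \<longleftrightarrow> glued_sum_indecomposable_in S"
proof -
  have I2: "\<And>r. r \<notin> S \<Longrightarrow> (\<exists>a b c1 c2. ucov r a b \<and> a \<in> S \<and> b \<in> S \<and> c1 \<in> S \<and> c2 \<in> S \<and> c1 \<noteq> c2 \<and>
        covers a c1 \<and> covers c1 b \<and> covers a c2 \<and> covers c2 b)" using I unfolding Inv_def by blast
  have xinc: "\<And>x r a b c1 c2. ucov (r::'a) a b \<Longrightarrow> covers a c1 \<Longrightarrow> covers c1 b \<Longrightarrow> covers a c2 \<Longrightarrow> covers c2 b \<Longrightarrow> c1 \<noteq> c2 \<Longrightarrow>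
      \<not> x \<le> r \<Longrightarrow> \<not> r \<le> x \<Longrightarrow> (\<not> x \<le> c1 \<and> \<not> c1 \<le> x) \<or> (\<not> x \<le> c2 \<and> \<not> c2 \<le> x)"
  proof -
    fix x r a b c1 c2 :: 'a
    assume u: "ucov r a b" and c: "covers a c1" "covers c1 b" "covers a c2" "covers c2 b" "c1 \<noteq> c2"
      and nx: "\<not> x \<le> r" "\<not> r \<le> x"
    have ar: "a \<le> r" "r \<le> b" using ucov_covers[OF u] by (auto simp: covers_def less_imp_le)
    have i: "inf c1 c2 = a" by (rule inf_atoms[OF c(1,3,5)])
    have s: "sup c1 c2 = b" by (rule sup_atoms[OF c(2,4,5)])
    have n12: "\<not> c1 \<le> c2" "\<not> c2 \<le> c1" using incomp_atoms[OF c(1,3,5)] incomp_atoms[OF c(3,1)] c(5) by auto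
    show "(\<not> x \<le> c1 \<and> \<not> c1 \<le> x) \<or> (\<not> x \<le> c2 \<and> \<not> c2 \<le> x)"
    proof (rule ccontr)
      assume h: "\<not> ?thesis"
      then consider "x \<le> c1" "x \<le> c2" | "c1 \<le> x" "c2 \<le> x" | "x \<le> c1" "c2 \<le> x" | "c1 \<le> x" "x \<le> c2" by blast
      then show False
      proof cases
        case 1 then have "x \<le> a" using i by (metis le_inf_iff)
        then show False using nx ar by (metis order.trans)
      next
        case 2 then have "b \<le> x" using s by (metis le_sup_iff)
        then show False using nx ar by (metis order.trans)
      next
        case 3 then show False using n12 by (metis order.trans)
      next
        case 4 then show False using n12 by (metis order.trans)
      qed
    qed
  qed
  show ?thesis
  proof
    assume G: "glued_sum_indecomposable_in (UNIV :: 'a set)"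
    have nc: "\<not> (\<forall>x\<in>S. \<forall>y\<in>S. x \<le> y \<or> y \<le> x)"
    proof (cases "\<exists>r. r \<notin> S")
      case True
      then obtain r where "r \<notin> S" by blast
      then obtain a b c1 c2 where W: "c1 \<in> S" "c2 \<in> S" "c1 \<noteq> c2" "covers a c1" "covers a c2"
        using I2 by blast
      then show ?thesis using incomp_atoms[OF W(4,5,3)] incomp_atoms[OF W(5,4)] by auto
    next
      case False
      then have "S = UNIV" by auto
      then show ?thesis using G unfolding glued_sum_indecomposable_in_def by simp
    qed
    have "\<forall>x\<in>S. (\<exists>y\<in>S. y < x) \<and> (\<exists>y\<in>S. x < y) \<longrightarrow> (\<exists>y\<in>S. \<not> x \<le> y \<and> \<not> y \<le> x)"
    proof (intro ballI impI)
      fix x assume x: "x \<in> S" and h: "(\<exists>y\<in>S. y < x) \<and> (\<exists>y\<in>S. x < y)"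
      then obtain y where y: "\<not> x \<le> y" "\<not> y \<le> x" using G unfolding glued_sum_indecomposable_in_def by blast
      show "\<exists>y\<in>S. \<not> x \<le> y \<and> \<not> y \<le> x"
      proof (cases "y \<in> S")
        case True then show ?thesis using y by blast
      next
        case False
        then obtain a b c1 c2 where W: "ucov y a b" "c1 \<in> S" "c2 \<in> S" "c1 \<noteq> c2"
          "covers a c1" "covers c1 b" "covers a c2" "covers c2 b" using I2 by blast
        show ?thesis using xinc[OF W(1,5,6,7,8,4) y] W(2,3) by blast
      qed
    qed
    then show "glued_sum_indecomposable_in S" using nc unfolding glued_sum_indecomposable_in_def by blast
  next
    assume G: "glued_sum_indecomposable_in S"
    have nc: "\<not> (\<forall>x\<in>(UNIV::'a set). \<forall>y\<in>UNIV. x \<le> y \<or> y \<le> x)"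
      using G unfolding glued_sum_indecomposable_in_def by blast
    have "\<forall>x\<in>(UNIV::'a set). (\<exists>y\<in>UNIV. y < x) \<and> (\<exists>y\<in>UNIV. x < y) \<longrightarrow> (\<exists>y\<in>UNIV. \<not> x \<le> y \<and> \<not> y \<le> x)"
    proof (intro ballI impI)
      fix x :: 'a assume h: "(\<exists>y\<in>UNIV. y < x) \<and> (\<exists>y\<in>UNIV. x < y)"
      then obtain y0 y1 where y: "y0 < x" "x < y1" by blast
      show "\<exists>y\<in>UNIV. \<not> x \<le> y \<and> \<not> y \<le> x"
      proof (cases "x \<in> S")
        case True
        have "\<exists>y\<in>S. y < x"
        proof (cases "y0 \<in> S")
          case True then show ?thesis using y by blast
        next
          case False
          then obtain a b where "ucov y0 a b" "a \<in> S" using I2 by blast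
          then show ?thesis using y ucov_covers by (metis covers_def order.strict_trans)
        qed
        moreover have "\<exists>y\<in>S. x < y"
        proof (cases "y1 \<in> S")
          case True then show ?thesis using y by blast
        next
          case False
          then obtain a b where "ucov y1 a b" "b \<in> S" using I2 by blast
          then show ?thesis using y ucov_covers by (metis covers_def order.strict_trans)
        qed
        ultimately show ?thesis using G True unfolding glued_sum_indecomposable_in_def by blast
      next
        case False
        then obtain a b c1 where W: "ucov x a b" "c1 \<in> S" "covers a c1" "covers c1 b" using I2 by blast
        have "c1 \<noteq> x" using W(2) False by blast
        then have "\<not> c1 \<le> x" "\<not> x \<le> c1"
          using ucov_le[OF W(1), of c1] W(3,4) by (auto simp: covers_def)
        then show ?thesis by blast
      qed
    qed
    then show "glued_sum_indecomposable_in (UNIV :: 'a set)" using nc unfolding glued_sum_indecomposable_in_def by blast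
  qed
qed

lemma liso_id: "lattice_iso (id :: 'a::lattice \<Rightarrow> 'a)"
  unfolding lattice_iso_def by simp

theorem mainTheorem8:
  fixes p1 :: "'a::{finite,lattice} \<Rightarrow> real \<times> real"
    and p2 :: "'b::{finite,lattice} \<Rightarrow> real \<times> real"
    and S1 :: "'a set" and S2 :: "'b set"
  assumes "semimodular TYPE('a)" and "semimodular TYPE('b)"
    and "planar_diagram p1" and "planar_diagram p2"
    and "full_slimming p1 S1" and "full_slimming p2 S2"
  shows "(glued_sum_indecomposable_in (UNIV :: 'a set) \<longleftrightarrow> glued_sum_indecomposable_in S1)
    \<and> (\<forall>\<phi> :: 'a \<Rightarrow> 'b. lattice_iso \<phi> \<longrightarrow>
          (\<exists>\<pi> :: 'a \<Rightarrow> 'a. lattice_iso \<pi> \<and> (\<forall>x. reducible_in UNIV x \<longrightarrow> \<pi> x = x) \<and>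
             lattice_iso_on (\<phi> \<circ> \<pi>) S1 S2 \<and> (\<forall>x\<in>S1. nu S1 x = nu S2 ((\<phi> \<circ> \<pi>) x))))
    \<and> (\<forall>(q :: 'a \<Rightarrow> real \<times> real) (q' :: 'a \<Rightarrow> real \<times> real) T T'. planar_diagram q \<and> planar_diagram q' \<and>
          full_slimming q T \<and> full_slimming q' T' \<longrightarrow> (\<exists>\<psi>. lattice_iso_on \<psi> T T'))"
proof (intro conjI allI impI)
  have "Inv S1" using assms(5) Inv_reach unfolding full_slimming_def by blast
  then show "glued_sum_indecomposable_in (UNIV :: 'a set) \<longleftrightarrow> glued_sum_indecomposable_in S1" by (rule glued)
next
  fix \<phi> :: "'a \<Rightarrow> 'b" assume "lattice_iso \<phi>"
  then show "\<exists>\<pi> :: 'a \<Rightarrow> 'a. lattice_iso \<pi> \<and> (\<forall>x. reducible_in UNIV x \<longrightarrow> \<pi> x = x) \<and>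
             lattice_iso_on (\<phi> \<circ> \<pi>) S1 S2 \<and> (\<forall>x\<in>S1. nu S1 x = nu S2 ((\<phi> \<circ> \<pi>) x))"
    using mainG[OF assms] by blast
next
  fix q q' :: "'a \<Rightarrow> real \<times> real" and T T' :: "'a set"
  assume h: "planar_diagram q \<and> planar_diagram q' \<and> full_slimming q T \<and> full_slimming q' T'"
  obtain \<pi> :: "'a \<Rightarrow> 'a" where "lattice_iso_on (id \<circ> \<pi>) T T'"
    using mainG[OF assms(1) assms(1), of q q' T T' id] h liso_id by blast
  then show "\<exists>\<psi>. lattice_iso_on \<psi> T T'" by blast
qed

end
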